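(* Let the data be generated by the linear-Gaussian model in the context, and consider a linear CEVAE with one-dimensional latent space ($d=1$) trained with the proxy reconstruction term removed, i.e. with the population objective $\mathcal L_0(\theta,\phi)=\mathbb E_{(x,t,y)\sim p}\Big[\mathbb E_{q_\phi(z\mid x,t,y)}[\log p_\theta(t\mid z)+\log p_\theta(y\mid z,t)]-\mathrm{KL}[q_\phi(z\mid x,t,y)\,\|\,p(z)]\Big]$. Then: (a) there exist global maximizers $(\theta,\phi)$ of $\mathcal L_0$ with $\gamma_{yz}=0$, and there exist global maximizers of $\mathcal L_0$ with $\gamma_t=0$; and (b) every global maximizer of $\mathcal L_0$ with $\gamma_{yz}=0$ or with $\gamma_t=0$ satisfies $p_\theta(y\mid do(t))=p(y\mid t)$ for all $t\in\mathbb R$, where $p(y\mid t)$ is the observational conditional distribution of $y$ given $t$ under the data distribution.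
   Context: Linear-Gaussian data generating model: $z\sim\mathcal N(0,1)$ is an unobserved confounder; given $z$, the observed variables are independent draws $x_1\mid z\sim\mathcal N(c_1 z,\sigma_1^2)$, $x_2\mid z\sim\mathcal N(c_2 z,\sigma_2^2)$, $t\mid z\sim\mathcal N(c_t z,\sigma_t^2)$, and $y\mid z,t\sim\mathcal N(c_{yz}z+c_{yt}t,\sigma_y^2)$, where $c_\cdot\in\mathbb R$ and $\sigma_\cdot>0$ are fixed parameters. Only $(x,t,y)$ with $x=(x_1,x_2)$ is observed, with joint law $p(x,t,y)$. CEVAE causal effect estimate: $p_\theta(y\mid do(t))=\int p_\theta(y\mid z,t)\,p(z)\,dz$ with prior $p(z)=\mathcal N(0,I_d)$. Linear CEVAE (here $d=1$): decoder conditionals $p_\theta(t\mid z)=\mathcal N(\gamma_t z,s_t^2)$ and $p_\theta(y\mid z,t)=\mathcal N(\gamma_{yz} z+\gamma_{yt}t,s_y^2)$ with scalar parameters $\gamma_t,\gamma_{yz},\gamma_{yt}\in\mathbb R$, $s_t,s_y>0$; encoder $q_\phi(z\mid x,t,y)=\mathcal N(a^\top(x_1,x_2,t,y)^\top,\,s_q^2)$ with $a\in\mathbb R^4$ and a single data-independent variance $s_q^2>0$. *)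

theory Defs
  imports "HOL-Probability.Probability"
begin

text \<open>Gaussian densities: normal_density mu sigma x is the density of N(mu, sigma^2) at x
  (sigma is the standard deviation).\<close>

record dgp =
  c_1  :: real
  c_2  :: real
  c_t  :: real
  c_yz :: real
  c_yt :: real
  sig_1 :: real
  sig_2 :: real
  sig_t :: real
  sig_y :: real

definition valid_dgp :: "dgp \<Rightarrow> bool" where
  "valid_dgp D \<longleftrightarrow> sig_1 D > 0 \<and> sig_2 D > 0 \<and> sig_t D > 0 \<and> sig_y D > 0"

definition p_obs :: "dgp \<Rightarrow> real \<Rightarrow> real \<Rightarrow> real \<Rightarrow> real \<Rightarrow> real" where
  "p_obs D x1 x2 t y = (LINT z|lborel.
      std_normal_density z * normal_density (c_1 D * z) (sig_1 D) x1
      * normal_density (c_2 D * z) (sig_2 D) x2 * normal_density (c_t D * z) (sig_t D) t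
      * normal_density (c_yz D * z + c_yt D * t) (sig_y D) y)"

definition p_ty :: "dgp \<Rightarrow> real \<Rightarrow> real \<Rightarrow> real" where
  "p_ty D t y = (LINT x1|lborel. LINT x2|lborel. p_obs D x1 x2 t y)"

definition p_t :: "dgp \<Rightarrow> real \<Rightarrow> real" where
  "p_t D t = (LINT y|lborel. p_ty D t y)"

definition p_cond :: "dgp \<Rightarrow> real \<Rightarrow> real \<Rightarrow> real" where
  "p_cond D t y = p_ty D t y / p_t D t"

record cevae =
  g_t  :: real
  g_yz :: real
  g_yt :: real
  s_t  :: real
  s_y  :: real
  a_1  :: real
  a_2  :: real
  a_t  :: real
  a_y  :: real
  s_q  :: real

definition valid_cevae :: "cevae \<Rightarrow> bool" where
  "valid_cevae P \<longleftrightarrow> s_t P > 0 \<and> s_y P > 0 \<and> s_q P > 0"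

definition dec_t :: "cevae \<Rightarrow> real \<Rightarrow> real \<Rightarrow> real" where
  "dec_t P z t = normal_density (g_t P * z) (s_t P) t"

definition dec_y :: "cevae \<Rightarrow> real \<Rightarrow> real \<Rightarrow> real \<Rightarrow> real" where
  "dec_y P z t y = normal_density (g_yz P * z + g_yt P * t) (s_y P) y"

definition enc :: "cevae \<Rightarrow> real \<Rightarrow> real \<Rightarrow> real \<Rightarrow> real \<Rightarrow> real \<Rightarrow> real" where
  "enc P x1 x2 t y z =
     normal_density (a_1 P * x1 + a_2 P * x2 + a_t P * t + a_y P * y) (s_q P) z"

definition KL_enc :: "cevae \<Rightarrow> real \<Rightarrow> real \<Rightarrow> real \<Rightarrow> real \<Rightarrow> real" where
  "KL_enc P x1 x2 t y =
     (LINT z|lborel. enc P x1 x2 t y z * ln (enc P x1 x2 t y z / std_normal_density z))"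

definition elbo0 :: "cevae \<Rightarrow> real \<Rightarrow> real \<Rightarrow> real \<Rightarrow> real \<Rightarrow> real" where
  "elbo0 P x1 x2 t y =
     (LINT z|lborel. enc P x1 x2 t y z * (ln (dec_t P z t) + ln (dec_y P z t y)))
     - KL_enc P x1 x2 t y"

definition L0 :: "dgp \<Rightarrow> cevae \<Rightarrow> real" where
  "L0 D P = (LINT x1|lborel. LINT x2|lborel. LINT t|lborel. LINT y|lborel.
               p_obs D x1 x2 t y * elbo0 P x1 x2 t y)"

definition is_global_max :: "dgp \<Rightarrow> cevae \<Rightarrow> bool" where
  "is_global_max D P \<longleftrightarrow> valid_cevae P \<and> (\<forall>P'. valid_cevae P' \<longrightarrow> L0 D P' \<le> L0 D P)"

definition p_do :: "cevae \<Rightarrow> real \<Rightarrow> real \<Rightarrow> real" where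
  "p_do P t y = (LINT z|lborel. dec_y P z t y * std_normal_density z)"

end

theory Submission
  imports Defs
begin
lemma nd_int2:
  assumes "0 < \<sigma>"
  shows "integrable lborel (\<lambda>u. normal_density \<mu> \<sigma> u * u^2)"
    and "(\<integral>u. normal_density \<mu> \<sigma> u * u^2 \<partial>lborel) = \<mu>^2 + \<sigma>^2"
proof -
  have e: "\<And>u. normal_density \<mu> \<sigma> u * u^2 = normal_density \<mu> \<sigma> u * (u-\<mu>)^2 + 2*\<mu>*(normal_density \<mu> \<sigma> u * u) - \<mu>^2 * normal_density \<mu> \<sigma> u"
    by (simp add: power2_eq_square algebra_simps)
  have i1: "integrable lborel (\<lambda>u. normal_density \<mu> \<sigma> u * (u-\<mu>)^2)"
    using integrable_normal_moment[OF assms] .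
  have i2: "integrable lborel (\<lambda>u. normal_density \<mu> \<sigma> u * u)"
    using integrable_normal_moment_nz_1[OF assms] .
  have v1: "(\<integral>u. normal_density \<mu> \<sigma> u * (u-\<mu>)^2 \<partial>lborel) = \<sigma>^2"
    using integral_normal_moment_even[OF assms, of \<mu> 1] assms by (simp add: power2_eq_square)
  show "integrable lborel (\<lambda>u. normal_density \<mu> \<sigma> u * u^2)"
    unfolding e using i1 i2 integrable_normal_density[OF assms] by auto
  show "(\<integral>u. normal_density \<mu> \<sigma> u * u^2 \<partial>lborel) = \<mu>^2 + \<sigma>^2"
    unfolding e using i1 i2 integrable_normal_density[OF assms] v1 integral_normal_moment_nz_1[OF assms]
      integral_normal_density[OF assms]
    by (simp add: power2_eq_square)
qed

lemma nd_quad: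
  assumes "0 < \<sigma>" and f: "\<And>u. f u = A + B*u + C*u^2"
  shows "integrable lborel (\<lambda>u. normal_density \<mu> \<sigma> u * f u)"
    and "(\<integral>u. normal_density \<mu> \<sigma> u * f u \<partial>lborel) = A + B*\<mu> + C*(\<mu>^2 + \<sigma>^2)"
proof -
  have e: "\<And>u. normal_density \<mu> \<sigma> u * f u = A * normal_density \<mu> \<sigma> u + B * (normal_density \<mu> \<sigma> u * u) + C * (normal_density \<mu> \<sigma> u * u^2)"
    by (simp add: f algebra_simps)
  note i = integrable_normal_density[OF assms(1)] integrable_normal_moment_nz_1[OF assms(1)] nd_int2(1)[OF assms(1)]
  show "integrable lborel (\<lambda>u. normal_density \<mu> \<sigma> u * f u)"
    unfolding e using i by auto
  show "(\<integral>u. normal_density \<mu> \<sigma> u * f u \<partial>lborel) = A + B*\<mu> + C*(\<mu>^2 + \<sigma>^2)"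
    unfolding e using i nd_int2(2)[OF assms(1)] integral_normal_moment_nz_1[OF assms(1)]
      integral_normal_density[OF assms(1)]
    by (simp add: power2_eq_square)
qed
lemma nd_prod:
  assumes r0: "0 < r0" and sg: "0 < \<sigma>"
  shows "normal_density m0 r0 z * normal_density (\<alpha>*z+\<beta>) \<sigma> u =
    normal_density (\<alpha>*m0+\<beta>) (sqrt (\<alpha>^2*r0^2+\<sigma>^2)) u *
    normal_density (m0 + \<alpha>*r0^2*(u-\<alpha>*m0-\<beta>)/(\<alpha>^2*r0^2+\<sigma>^2)) (sqrt (r0^2*\<sigma>^2/(\<alpha>^2*r0^2+\<sigma>^2))) z"
proof -
  define S where "S = \<alpha>^2*r0^2+\<sigma>^2"
  have Sp: "0 < S" unfolding S_def using sg by (simp add: add_nonneg_pos)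
  have c: "sqrt (2*pi*r0^2) * sqrt (2*pi*\<sigma>^2) = sqrt (2*pi*S) * sqrt (2*pi*(r0^2*\<sigma>^2/S))"
    using Sp by (simp add: real_sqrt_mult[symmetric] field_simps)
  have ex: "-((z-m0)^2)/(2*r0^2) + -((u-(\<alpha>*z+\<beta>))^2)/(2*\<sigma>^2) =
     -((u-(\<alpha>*m0+\<beta>))^2)/(2*S) + -((z-(m0 + \<alpha>*r0^2*(u-\<alpha>*m0-\<beta>)/S))^2)/(2*(r0^2*\<sigma>^2/S))"
    using Sp r0 sg apply (simp add: field_simps)
    apply (simp only: S_def)
    apply algebra
    done
  have "normal_density m0 r0 z * normal_density (\<alpha>*z+\<beta>) \<sigma> u =
      1/(sqrt (2*pi*r0^2) * sqrt (2*pi*\<sigma>^2)) * exp (-((z-m0)^2)/(2*r0^2) + -((u-(\<alpha>*z+\<beta>))^2)/(2*\<sigma>^2))"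
    unfolding normal_density_def by (simp add: mult_exp_exp)
  also have "\<dots> = 1/(sqrt (2*pi*S) * sqrt (2*pi*(r0^2*\<sigma>^2/S))) *
     exp (-((u-(\<alpha>*m0+\<beta>))^2)/(2*S) + -((z-(m0 + \<alpha>*r0^2*(u-\<alpha>*m0-\<beta>)/S))^2)/(2*(r0^2*\<sigma>^2/S)))"
    using c ex by simp
  also have "\<dots> = normal_density (\<alpha>*m0+\<beta>) (sqrt S) u *
    normal_density (m0 + \<alpha>*r0^2*(u-\<alpha>*m0-\<beta>)/S) (sqrt (r0^2*\<sigma>^2/S)) z"
    unfolding normal_density_def using Sp by (simp add: mult_exp_exp)
  finally show ?thesis unfolding S_def .
qed
abbreviation "M2 \<equiv> (lborel::real measure) \<Otimes>\<^sub>M (lborel::real measure)"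
abbreviation "M3 \<equiv> (lborel::real measure) \<Otimes>\<^sub>M M2"
abbreviation "M4 \<equiv> (lborel::real measure) \<Otimes>\<^sub>M M3"

lemma sf_M2: "sigma_finite_measure M2"
  by (intro sigma_finite_pair_measure lborel.sigma_finite_measure_axioms)
lemma sf_M3: "sigma_finite_measure M3"
  by (intro sigma_finite_pair_measure lborel.sigma_finite_measure_axioms sf_M2)
lemma sf_M4: "sigma_finite_measure M4"
  by (intro sigma_finite_pair_measure lborel.sigma_finite_measure_axioms sf_M3)

interpretation P12: pair_sigma_finite lborel M2
  by (intro pair_sigma_finite.intro lborel.sigma_finite_measure_axioms sf_M2)
interpretation P13: pair_sigma_finite lborel M3
  by (intro pair_sigma_finite.intro lborel.sigma_finite_measure_axioms sf_M3)
interpretation P41: pair_sigma_finite M4 lborel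
  by (intro pair_sigma_finite.intro lborel.sigma_finite_measure_axioms sf_M4)

lemma nest2:
  fixes F :: "real \<times> real \<Rightarrow> real"
  assumes "integrable M2 F"
  shows "(\<integral>x. \<integral>y. F (x,y) \<partial>lborel \<partial>lborel) = integral\<^sup>L M2 F"
  using lborel_pair.integral_fst'[OF assms] .

lemma nest3:
  fixes F :: "real \<times> real \<times> real \<Rightarrow> real"
  assumes F: "integrable M3 F"
  shows "(\<integral>x. \<integral>y. \<integral>z. F (x,y,z) \<partial>lborel \<partial>lborel \<partial>lborel) = integral\<^sup>L M3 F"
proof -
  have Fm[measurable]: "F \<in> borel_measurable M3" using F by auto
  have "integral\<^sup>L M3 F = (\<integral>x. integral\<^sup>L M2 (\<lambda>yz. F (x,yz)) \<partial>lborel)"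
    using P12.integral_fst'[OF F] by simp
  also have "\<dots> = (\<integral>x. \<integral>y. \<integral>z. F (x,y,z) \<partial>lborel \<partial>lborel \<partial>lborel)"
  proof (rule integral_cong_AE)
    show "(\<lambda>x. integral\<^sup>L M2 (\<lambda>yz. F (x, yz))) \<in> borel_measurable lborel"
      using P12.integrable_fst'[OF F] by auto
    show "(\<lambda>x. \<integral>y. \<integral>z. F (x, y, z) \<partial>lborel \<partial>lborel) \<in> borel_measurable lborel"
      by measurable
    show "AE x in lborel. integral\<^sup>L M2 (\<lambda>yz. F (x, yz)) = (\<integral>y. \<integral>z. F (x, y, z) \<partial>lborel \<partial>lborel)"
      using P12.AE_integrable_fst'[OF F]
      by eventually_elim (subst nest2, auto)
  qed
  finally show ?thesis by simp
qed

lemma nest4: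
  fixes F :: "real \<times> real \<times> real \<times> real \<Rightarrow> real"
  assumes F: "integrable M4 F"
  shows "(\<integral>x. \<integral>y. \<integral>z. \<integral>w. F (x,y,z,w) \<partial>lborel \<partial>lborel \<partial>lborel \<partial>lborel) = integral\<^sup>L M4 F"
proof -
  have Fm[measurable]: "F \<in> borel_measurable M4" using F by auto
  have "integral\<^sup>L M4 F = (\<integral>x. integral\<^sup>L M3 (\<lambda>yz. F (x,yz)) \<partial>lborel)"
    using P13.integral_fst'[OF F] by simp
  also have "\<dots> = (\<integral>x. \<integral>y. \<integral>z. \<integral>w. F (x,y,z,w) \<partial>lborel \<partial>lborel \<partial>lborel \<partial>lborel)"
  proof (rule integral_cong_AE)
    show "(\<lambda>x. integral\<^sup>L M3 (\<lambda>yz. F (x, yz))) \<in> borel_measurable lborel"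
      using P13.integrable_fst'[OF F] by auto
    show "(\<lambda>x. \<integral>y. \<integral>z. \<integral>w. F (x, y, z, w) \<partial>lborel \<partial>lborel \<partial>lborel) \<in> borel_measurable lborel"
      by measurable
    show "AE x in lborel. integral\<^sup>L M3 (\<lambda>yz. F (x, yz)) = (\<integral>y. \<integral>z. \<integral>w. F (x, y, z, w) \<partial>lborel \<partial>lborel \<partial>lborel)"
      using P13.AE_integrable_fst'[OF F]
      by eventually_elim (subst nest3, auto)
  qed
  finally show ?thesis by simp
qed

definition gg :: "dgp \<Rightarrow> real \<Rightarrow> real \<Rightarrow> real \<Rightarrow> real \<Rightarrow> real \<Rightarrow> real" where
  "gg D z x1 x2 t y = std_normal_density z * normal_density (c_1 D * z) (sig_1 D) x1
      * normal_density (c_2 D * z) (sig_2 D) x2 * normal_density (c_t D * z) (sig_t D) t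
      * normal_density (c_yz D * z + c_yt D * t) (sig_y D) y"

lemma p_obs_gg: "p_obs D x1 x2 t y = (\<integral>z. gg D z x1 x2 t y \<partial>lborel)"
  unfolding p_obs_def gg_def ..

lemma gg_nonneg: "0 \<le> gg D z x1 x2 t y"
  unfolding gg_def by simp

lemma gg_meas[measurable]: "(\<lambda>((x1,x2,t,y),z). gg D z x1 x2 t y) \<in> borel_measurable (M4 \<Otimes>\<^sub>M lborel)"
  unfolding gg_def normal_density_def split_beta' by measurable

definition BB :: "real \<Rightarrow> real \<Rightarrow> real \<Rightarrow> real \<Rightarrow> real" where
  "BB x1 x2 t y = 1 + x1^2 + x2^2 + t^2 + y^2"

lemma nnq:
  assumes "0 < \<sigma>" "0 \<le> K" and f: "\<And>u. f u = A + B*u + C*u^2" and fn: "\<And>u. 0 \<le> f u"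
  shows "(\<integral>\<^sup>+u. ennreal (K * (normal_density \<mu> \<sigma> u * f u)) \<partial>lborel) = ennreal (K * (A + B*\<mu> + C*(\<mu>^2 + \<sigma>^2)))"
proof -
  have i: "integrable lborel (\<lambda>u. K * (normal_density \<mu> \<sigma> u * f u))"
    using nd_quad(1)[OF assms(1) f] by auto
  have "(\<integral>\<^sup>+u. ennreal (K * (normal_density \<mu> \<sigma> u * f u)) \<partial>lborel) = ennreal (\<integral>u. K * (normal_density \<mu> \<sigma> u * f u) \<partial>lborel)"
    by (rule nn_integral_eq_integral[OF i]) (use assms in simp)
  also have "\<dots> = ennreal (K * (A + B*\<mu> + C*(\<mu>^2 + \<sigma>^2)))"
    using nd_quad(2)[OF assms(1) f] by simp
  finally show ?thesis .
qed

lemma nnest4: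
  fixes F :: "real \<times> real \<times> real \<times> real \<Rightarrow> ennreal"
  assumes [measurable]: "F \<in> borel_measurable M4"
  shows "integral\<^sup>N M4 F = (\<integral>\<^sup>+x. \<integral>\<^sup>+y. \<integral>\<^sup>+z. \<integral>\<^sup>+w. F (x,y,z,w) \<partial>lborel \<partial>lborel \<partial>lborel \<partial>lborel)"
proof -
  have "integral\<^sup>N M4 F = (\<integral>\<^sup>+x. integral\<^sup>N M3 (\<lambda>v. F (x,v)) \<partial>lborel)"
    by (rule sigma_finite_measure.nn_integral_fst[OF sf_M3, symmetric]) simp
  also have "\<dots> = (\<integral>\<^sup>+x. (\<integral>\<^sup>+y. integral\<^sup>N M2 (\<lambda>v. F (x,y,v)) \<partial>lborel) \<partial>lborel)"
    by (intro nn_integral_cong sigma_finite_measure.nn_integral_fst[OF sf_M2, symmetric]) simp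
  also have "\<dots> = (\<integral>\<^sup>+x. \<integral>\<^sup>+y. \<integral>\<^sup>+z. \<integral>\<^sup>+w. F (x,y,z,w) \<partial>lborel \<partial>lborel \<partial>lborel \<partial>lborel)"
    by (intro nn_integral_cong lborel.nn_integral_fst[symmetric]) simp
  finally show ?thesis .
qed

lemma gB_int:
  assumes D: "valid_dgp D"
  shows "integrable (M4 \<Otimes>\<^sub>M lborel) (\<lambda>((x1,x2,t,y),z). gg D z x1 x2 t y * BB x1 x2 t y)"
proof (rule integrableI_bounded)
  have s: "0 < sig_1 D" "0 < sig_2 D" "0 < sig_t D" "0 < sig_y D" using D unfolding valid_dgp_def by auto
  show m: "(\<lambda>((x1,x2,t,y),z). gg D z x1 x2 t y * BB x1 x2 t y) \<in> borel_measurable (M4 \<Otimes>\<^sub>M lborel)"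
    unfolding gg_def BB_def normal_density_def split_beta' by measurable
  define c1 c2 ct cyz cyt Sg1 Sg2 Sgt Sgy where defs: "c1 = c_1 D" "c2 = c_2 D" "ct = c_t D" "cyz = c_yz D" "cyt = c_yt D"
    "Sg1 = sig_1 D" "Sg2 = sig_2 D" "Sgt = sig_t D" "Sgy = sig_y D"
  have "(\<integral>\<^sup>+p. ennreal (norm ((\<lambda>((x1,x2,t,y),z). gg D z x1 x2 t y * BB x1 x2 t y) p)) \<partial>(M4 \<Otimes>\<^sub>M lborel))
      = (\<integral>\<^sup>+z. (\<integral>\<^sup>+w. ennreal (norm ((\<lambda>((x1,x2,t,y),z). gg D z x1 x2 t y * BB x1 x2 t y) (w,z))) \<partial>M4) \<partial>lborel)"
    by (rule P41.nn_integral_snd[symmetric]) (use m in measurable)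
  also have "\<dots> = (\<integral>\<^sup>+z. (\<integral>\<^sup>+x1. \<integral>\<^sup>+x2. \<integral>\<^sup>+t. \<integral>\<^sup>+y. ennreal (gg D z x1 x2 t y * BB x1 x2 t y) \<partial>lborel \<partial>lborel \<partial>lborel \<partial>lborel) \<partial>lborel)"
  proof (intro nn_integral_cong)
    fix z
    have "(\<integral>\<^sup>+w. ennreal (norm ((\<lambda>((x1,x2,t,y),z). gg D z x1 x2 t y * BB x1 x2 t y) (w,z))) \<partial>M4)
       = (\<integral>\<^sup>+w. ennreal (case w of (x1,x2,t,y) \<Rightarrow> gg D z x1 x2 t y * BB x1 x2 t y) \<partial>M4)"
      by (intro nn_integral_cong) (auto simp: gg_nonneg BB_def split: prod.splits)
    also have "\<dots> = (\<integral>\<^sup>+x1. \<integral>\<^sup>+x2. \<integral>\<^sup>+t. \<integral>\<^sup>+y. ennreal (case (x1,x2,t,y) of (x1,x2,t,y) \<Rightarrow> gg D z x1 x2 t y * BB x1 x2 t y) \<partial>lborel \<partial>lborel \<partial>lborel \<partial>lborel)"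
      by (rule nnest4) (unfold gg_def BB_def normal_density_def split_beta', measurable)
    finally show "(\<integral>\<^sup>+w. ennreal (norm ((\<lambda>((x1,x2,t,y),z). gg D z x1 x2 t y * BB x1 x2 t y) (w,z))) \<partial>M4)
       = (\<integral>\<^sup>+x1. \<integral>\<^sup>+x2. \<integral>\<^sup>+t. \<integral>\<^sup>+y. ennreal (gg D z x1 x2 t y * BB x1 x2 t y) \<partial>lborel \<partial>lborel \<partial>lborel \<partial>lborel)"
      by simp
  qed
  also have "\<dots> = (\<integral>\<^sup>+z. ennreal (std_normal_density z * (
       (1 + Sgy^2 + (1+cyt^2)*Sgt^2 + Sg2^2 + Sg1^2) + 0*z +
       (cyz^2 + 2*cyz*cyt*ct + (1+cyt^2)*ct^2 + c2^2 + c1^2)*z^2)) \<partial>lborel)"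
  proof (intro nn_integral_cong)
    fix z
    have Iy: "\<And>x1 x2 t. (\<integral>\<^sup>+y. ennreal (gg D z x1 x2 t y * BB x1 x2 t y) \<partial>lborel) =
       ennreal (std_normal_density z * normal_density (c1 * z) Sg1 x1 * normal_density (c2 * z) Sg2 x2
         * (normal_density (ct * z) Sgt t * ((1 + x1^2 + x2^2 + cyz^2*z^2 + Sgy^2) + (2*cyz*z*cyt)*t + (1+cyt^2)*t^2)))"
    proof -
      fix x1 x2 t
      have "(\<integral>\<^sup>+y. ennreal (gg D z x1 x2 t y * BB x1 x2 t y) \<partial>lborel) =
        (\<integral>\<^sup>+y. ennreal ((std_normal_density z * normal_density (c1 * z) Sg1 x1 * normal_density (c2 * z) Sg2 x2
         * normal_density (ct * z) Sgt t) * (normal_density (cyz * z + cyt * t) Sgy y * (1 + x1^2 + x2^2 + t^2 + y^2))) \<partial>lborel)"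
        by (intro nn_integral_cong) (simp add: gg_def BB_def defs algebra_simps)
      also have "\<dots> = ennreal ((std_normal_density z * normal_density (c1 * z) Sg1 x1 * normal_density (c2 * z) Sg2 x2
         * normal_density (ct * z) Sgt t) * ((1 + x1^2 + x2^2 + t^2) + 0*(cyz * z + cyt * t) + 1*((cyz * z + cyt * t)^2 + Sgy^2)))"
        by (rule nnq) (use s in \<open>auto simp: defs\<close>)
      also have "\<dots> = ennreal (std_normal_density z * normal_density (c1 * z) Sg1 x1 * normal_density (c2 * z) Sg2 x2
         * (normal_density (ct * z) Sgt t * ((1 + x1^2 + x2^2 + cyz^2*z^2 + Sgy^2) + (2*cyz*z*cyt)*t + (1+cyt^2)*t^2)))"
        by (simp add: power2_eq_square algebra_simps)
      finally show "?thesis x1 x2 t" .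
    qed
    have It: "\<And>x1 x2. (\<integral>\<^sup>+t. (\<integral>\<^sup>+y. ennreal (gg D z x1 x2 t y * BB x1 x2 t y) \<partial>lborel) \<partial>lborel) =
       ennreal (std_normal_density z * normal_density (c1 * z) Sg1 x1 * (normal_density (c2 * z) Sg2 x2
         * ((1 + x1^2 + cyz^2*z^2 + Sgy^2 + 2*cyz*cyt*ct*z^2 + (1+cyt^2)*(ct^2*z^2+Sgt^2)) + 0*x2 + 1*x2^2)))"
    proof -
      fix x1 x2
      have nn: "\<And>t. 0 \<le> (1 + x1^2 + x2^2 + cyz^2*z^2 + Sgy^2) + (2*cyz*z*cyt)*t + (1+cyt^2)*t^2"
      proof -
        fix t
        have "(1 + x1^2 + x2^2 + cyz^2*z^2 + Sgy^2) + (2*cyz*z*cyt)*t + (1+cyt^2)*t^2 = 1 + x1^2 + x2^2 + (cyz*z+cyt*t)^2 + Sgy^2 + t^2"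
          by (simp add: power2_eq_square algebra_simps)
        also have "0 \<le> \<dots>" by (intro add_nonneg_nonneg) auto
        finally show "?thesis t" .
      qed
      have "(\<integral>\<^sup>+t. (\<integral>\<^sup>+y. ennreal (gg D z x1 x2 t y * BB x1 x2 t y) \<partial>lborel) \<partial>lborel) =
        ennreal (std_normal_density z * normal_density (c1 * z) Sg1 x1 * normal_density (c2 * z) Sg2 x2
         * ((1 + x1^2 + x2^2 + cyz^2*z^2 + Sgy^2) + (2*cyz*z*cyt)*(ct*z) + (1+cyt^2)*((ct*z)^2 + Sgt^2)))"
        unfolding Iy by (rule nnq) (use s nn in \<open>auto simp: defs\<close>)
      then show "?thesis x1 x2"
        by (simp add: power2_eq_square algebra_simps)
    qed
    have hz: "0 \<le> cyz^2*z^2 + 2*cyz*cyt*ct*z^2 + (1+cyt^2)*(ct^2*z^2+Sgt^2)"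
    proof -
      have "cyz^2*z^2 + 2*cyz*cyt*ct*z^2 + (1+cyt^2)*(ct^2*z^2+Sgt^2) = (cyz+cyt*ct)^2*z^2 + ct^2*z^2 + (1+cyt^2)*Sgt^2"
        by (simp add: power2_eq_square algebra_simps)
      also have "0 \<le> \<dots>" by (intro add_nonneg_nonneg mult_nonneg_nonneg) auto
      finally show ?thesis .
    qed
    have Ix2: "\<And>x1. (\<integral>\<^sup>+x2. \<integral>\<^sup>+t. (\<integral>\<^sup>+y. ennreal (gg D z x1 x2 t y * BB x1 x2 t y) \<partial>lborel) \<partial>lborel \<partial>lborel) =
       ennreal (std_normal_density z * (normal_density (c1 * z) Sg1 x1 * 
         ((1 + cyz^2*z^2 + Sgy^2 + 2*cyz*cyt*ct*z^2 + (1+cyt^2)*(ct^2*z^2+Sgt^2) + c2^2*z^2 + Sg2^2) + 0*x1 + 1*x1^2)))"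
    proof -
      fix x1
      have "(\<integral>\<^sup>+x2. \<integral>\<^sup>+t. (\<integral>\<^sup>+y. ennreal (gg D z x1 x2 t y * BB x1 x2 t y) \<partial>lborel) \<partial>lborel \<partial>lborel) =
        ennreal (std_normal_density z * normal_density (c1 * z) Sg1 x1 * 
         ((1 + x1^2 + cyz^2*z^2 + Sgy^2 + 2*cyz*cyt*ct*z^2 + (1+cyt^2)*(ct^2*z^2+Sgt^2)) + 0*(c2*z) + 1*((c2*z)^2 + Sg2^2)))"
        unfolding It apply (rule nnq)
        using s apply (simp add: defs)
          apply simp
         apply simp
        subgoal for x2 using hz zero_le_power2[of x1] zero_le_power2[of x2] zero_le_power2[of Sgy] zero_le_power2[of Sg2] by linarith
        done
      then show "?thesis x1"
        by (simp add: power2_eq_square algebra_simps)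
    qed
    have "(\<integral>\<^sup>+x1. \<integral>\<^sup>+x2. \<integral>\<^sup>+t. \<integral>\<^sup>+y. ennreal (gg D z x1 x2 t y * BB x1 x2 t y) \<partial>lborel \<partial>lborel \<partial>lborel \<partial>lborel) =
       ennreal (std_normal_density z * 
         ((1 + cyz^2*z^2 + Sgy^2 + 2*cyz*cyt*ct*z^2 + (1+cyt^2)*(ct^2*z^2+Sgt^2) + c2^2*z^2 + Sg2^2) + 0*(c1*z) + 1*((c1*z)^2 + Sg1^2)))"
      unfolding Ix2 apply (rule nnq)
        using s apply (simp add: defs)
          apply simp
         apply simp
        subgoal for x1 using hz mult_nonneg_nonneg[OF zero_le_power2[of c2] zero_le_power2[of z]] zero_le_power2[of x1] zero_le_power2[of Sgy] zero_le_power2[of Sg2] by linarith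
        done
    then show "(\<integral>\<^sup>+x1. \<integral>\<^sup>+x2. \<integral>\<^sup>+t. \<integral>\<^sup>+y. ennreal (gg D z x1 x2 t y * BB x1 x2 t y) \<partial>lborel \<partial>lborel \<partial>lborel \<partial>lborel) =
      ennreal (std_normal_density z * (
       (1 + Sgy^2 + (1+cyt^2)*Sgt^2 + Sg2^2 + Sg1^2) + 0*z +
       (cyz^2 + 2*cyz*cyt*ct + (1+cyt^2)*ct^2 + c2^2 + c1^2)*z^2))"
      by (simp add: power2_eq_square algebra_simps)
  qed
  also have "\<dots> = ennreal (1 * ((1 + Sgy^2 + (1+cyt^2)*Sgt^2 + Sg2^2 + Sg1^2) + 0*0 +
       (cyz^2 + 2*cyz*cyt*ct + (1+cyt^2)*ct^2 + c2^2 + c1^2)*(0^2 + 1^2)))"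
  proof -
    have C0: "0 \<le> cyz^2 + 2*cyz*cyt*ct + (1+cyt^2)*ct^2 + c2^2 + c1^2"
    proof -
      have "cyz^2 + 2*cyz*cyt*ct + (1+cyt^2)*ct^2 + c2^2 + c1^2 = (cyz+cyt*ct)^2 + ct^2 + c2^2 + c1^2"
        by (simp add: power2_eq_square algebra_simps)
      then show ?thesis by simp
    qed
    have A0: "0 \<le> 1 + Sgy^2 + (1+cyt^2)*Sgt^2 + Sg2^2 + Sg1^2"
      by (intro add_nonneg_nonneg mult_nonneg_nonneg) auto
    show ?thesis
      apply (subst nnq[symmetric, where K=1])
      using A0 C0 by (auto intro!: add_nonneg_nonneg mult_nonneg_nonneg)
  qed
  also have "\<dots> < \<infinity>" by simp
  finally show "(\<integral>\<^sup>+p. ennreal (norm ((\<lambda>((x1,x2,t,y),z). gg D z x1 x2 t y * BB x1 x2 t y) p)) \<partial>(M4 \<Otimes>\<^sub>M lborel)) < \<infinity>" .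
qed

lemma BB_ge1: "1 \<le> BB x1 x2 t y"
  unfolding BB_def by (simp add: add_nonneg_nonneg)

lemma Gint:
  assumes D: "valid_dgp D"
    and hm: "(\<lambda>w. h (fst w) (fst (snd w)) (fst (snd (snd w))) (snd (snd (snd w)))) \<in> borel_measurable M4"
    and hb: "\<And>x1 x2 t y. \<bar>h x1 x2 t y\<bar> \<le> K * BB x1 x2 t y"
  shows "integrable (M4 \<Otimes>\<^sub>M lborel) (\<lambda>((x1,x2,t,y),z). gg D z x1 x2 t y * h x1 x2 t y)"
proof (rule Bochner_Integration.integrable_bound)
  have K: "0 \<le> K" using hb[of 0 0 0 0] by (simp add: BB_def)
  show "integrable (M4 \<Otimes>\<^sub>M lborel) (\<lambda>p. K * ((\<lambda>((x1,x2,t,y),z). gg D z x1 x2 t y * BB x1 x2 t y) p))"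
    using gB_int[OF D] by (rule integrable_mult_right)
  have hm2: "(\<lambda>p. h (fst (fst p)) (fst (snd (fst p))) (fst (snd (snd (fst p)))) (snd (snd (snd (fst p))))) \<in> borel_measurable (M4 \<Otimes>\<^sub>M lborel)"
    using measurable_compose[OF measurable_fst hm, of lborel] by simp
  have gm: "(\<lambda>p. gg D (snd p) (fst (fst p)) (fst (snd (fst p))) (fst (snd (snd (fst p)))) (snd (snd (snd (fst p))))) \<in> borel_measurable (M4 \<Otimes>\<^sub>M lborel)"
    using gg_meas[of D] by (simp add: split_beta')
  show "(\<lambda>((x1,x2,t,y),z). gg D z x1 x2 t y * h x1 x2 t y) \<in> borel_measurable (M4 \<Otimes>\<^sub>M lborel)"
    unfolding split_beta' using hm2 gm by measurable
  show "AE p in M4 \<Otimes>\<^sub>M lborel. norm ((\<lambda>((x1,x2,t,y),z). gg D z x1 x2 t y * h x1 x2 t y) p)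
      \<le> norm (K * ((\<lambda>((x1,x2,t,y),z). gg D z x1 x2 t y * BB x1 x2 t y) p))"
  proof (intro AE_I2)
    fix p :: "(real \<times> real \<times> real \<times> real) \<times> real"
    obtain x1 x2 t y z where p: "p = ((x1,x2,t,y),z)" by (metis prod.collapse)
    have "\<bar>gg D z x1 x2 t y * h x1 x2 t y\<bar> = gg D z x1 x2 t y * \<bar>h x1 x2 t y\<bar>"
      by (simp add: abs_mult gg_nonneg)
    also have "\<dots> \<le> gg D z x1 x2 t y * (K * BB x1 x2 t y)"
      by (intro mult_left_mono hb gg_nonneg)
    also have "\<dots> = \<bar>K * (gg D z x1 x2 t y * BB x1 x2 t y)\<bar>"
      using K BB_ge1[of x1 x2 t y] gg_nonneg[of D z x1 x2 t y] by (simp add: abs_mult)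
    finally show "norm ((\<lambda>((x1,x2,t,y),z). gg D z x1 x2 t y * h x1 x2 t y) p)
      \<le> norm (K * ((\<lambda>((x1,x2,t,y),z). gg D z x1 x2 t y * BB x1 x2 t y) p))"
      unfolding p by simp
  qed
qed

lemma pint:
  assumes D: "valid_dgp D"
    and hm: "(\<lambda>w. h (fst w) (fst (snd w)) (fst (snd (snd w))) (snd (snd (snd w)))) \<in> borel_measurable M4"
    and hb: "\<And>x1 x2 t y. \<bar>h x1 x2 t y\<bar> \<le> K * BB x1 x2 t y"
  shows "integrable M4 (\<lambda>(x1,x2,t,y). p_obs D x1 x2 t y * h x1 x2 t y)"
    and "integral\<^sup>L M4 (\<lambda>(x1,x2,t,y). p_obs D x1 x2 t y * h x1 x2 t y) =
         (\<integral>z. integral\<^sup>L M4 (\<lambda>(x1,x2,t,y). gg D z x1 x2 t y * h x1 x2 t y) \<partial>lborel)"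
    and "AE z in lborel. integrable M4 (\<lambda>(x1,x2,t,y). gg D z x1 x2 t y * h x1 x2 t y)"
proof -
  note G = Gint[OF D hm hb]
  have eq: "\<And>w. (\<lambda>(x1,x2,t,y). p_obs D x1 x2 t y * h x1 x2 t y) w =
      (\<integral>z. (\<lambda>((x1,x2,t,y),z). gg D z x1 x2 t y * h x1 x2 t y) (w,z) \<partial>lborel)"
    by (auto simp: p_obs_gg split: prod.splits)
  show "integrable M4 (\<lambda>(x1,x2,t,y). p_obs D x1 x2 t y * h x1 x2 t y)"
    unfolding eq by (rule P41.integrable_fst'[OF G])
  have "integral\<^sup>L M4 (\<lambda>(x1,x2,t,y). p_obs D x1 x2 t y * h x1 x2 t y) =
       integral\<^sup>L (M4 \<Otimes>\<^sub>M lborel) (\<lambda>((x1,x2,t,y),z). gg D z x1 x2 t y * h x1 x2 t y)"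
    unfolding eq by (rule P41.integral_fst'[OF G])
  also have "\<dots> = (\<integral>z. integral\<^sup>L M4 (\<lambda>(x1,x2,t,y). gg D z x1 x2 t y * h x1 x2 t y) \<partial>lborel)"
    using P41.integral_snd[of "\<lambda>w z. (\<lambda>((x1,x2,t,y),z). gg D z x1 x2 t y * h x1 x2 t y) (w,z)"] G
    by (simp add: split_beta')
  finally show "integral\<^sup>L M4 (\<lambda>(x1,x2,t,y). p_obs D x1 x2 t y * h x1 x2 t y) =
         (\<integral>z. integral\<^sup>L M4 (\<lambda>(x1,x2,t,y). gg D z x1 x2 t y * h x1 x2 t y) \<partial>lborel)" .
  show "AE z in lborel. integrable M4 (\<lambda>(x1,x2,t,y). gg D z x1 x2 t y * h x1 x2 t y)"
    using P41.AE_integrable_snd[of "\<lambda>w z. (\<lambda>((x1,x2,t,y),z). gg D z x1 x2 t y * h x1 x2 t y) (w,z)"] G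
    by (simp add: split_beta')
qed

definition "Stt D = c_t D ^ 2 + sig_t D ^ 2"
definition "Sty D = c_yz D * c_t D + c_yt D * Stt D"
definition "Syy D = c_yz D ^ 2 + c_yt D ^ 2 * Stt D + 2 * c_yz D * c_yt D * c_t D + sig_y D ^ 2"

lemma NZ:
  assumes D: "valid_dgp D"
  shows "(\<integral>x1. \<integral>x2. \<integral>t. \<integral>y. gg D z x1 x2 t y * (a0 + a1*t^2 + a2*(t*y) + a3*y^2) \<partial>lborel \<partial>lborel \<partial>lborel \<partial>lborel)
    = std_normal_density z * ((a0 + a3* sig_y D^2 + (a1 + a2*c_yt D + a3*c_yt D^2)* sig_t D^2) + 0*z +
       (a3*c_yz D^2 + a2*c_yz D*c_t D + 2*a3*c_yz D*c_yt D*c_t D + (a1 + a2*c_yt D + a3*c_yt D^2)*c_t D^2)*z^2)"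
proof -
  have s: "0 < sig_1 D" "0 < sig_2 D" "0 < sig_t D" "0 < sig_y D" using D unfolding valid_dgp_def by auto
  define C1 C2 Ct Cyz Cyt S1 S2 St Sy where defs: "C1 = c_1 D" "C2 = c_2 D" "Ct = c_t D" "Cyz = c_yz D" "Cyt = c_yt D"
    "S1 = sig_1 D" "S2 = sig_2 D" "St = sig_t D" "Sy = sig_y D"
  have s': "0 < S1" "0 < S2" "0 < St" "0 < Sy" using s by (simp_all add: defs)
  define Kt where "Kt = a1 + a2*Cyt + a3*Cyt^2"
  have Iy: "\<And>x1 x2 t. (\<integral>y. gg D z x1 x2 t y * (a0 + a1*t^2 + a2*(t*y) + a3*y^2) \<partial>lborel) =
      (std_normal_density z * normal_density (C1 * z) S1 x1 * normal_density (C2 * z) S2 x2) *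
      (normal_density (Ct * z) St t * ((a0 + a3*Cyz^2*z^2 + a3*Sy^2) + ((a2*Cyz + 2*a3*Cyz*Cyt)*z)*t + Kt*t^2))"
  proof -
    fix x1 x2 t
    have "(\<integral>y. gg D z x1 x2 t y * (a0 + a1*t^2 + a2*(t*y) + a3*y^2) \<partial>lborel) =
      (\<integral>y. (std_normal_density z * normal_density (C1 * z) S1 x1 * normal_density (C2 * z) S2 x2 * normal_density (Ct * z) St t) *
          (normal_density (Cyz * z + Cyt * t) Sy y * (a0 + a1*t^2 + a2*(t*y) + a3*y^2)) \<partial>lborel)"
      by (intro Bochner_Integration.integral_cong) (simp_all add: gg_def defs algebra_simps)
    also have "\<dots> = (std_normal_density z * normal_density (C1 * z) S1 x1 * normal_density (C2 * z) S2 x2 * normal_density (Ct * z) St t) *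
        ((a0 + a1*t^2) + (a2*t)*(Cyz * z + Cyt * t) + a3*((Cyz * z + Cyt * t)^2 + Sy^2))"
      by (subst integral_mult_right_zero, subst nd_quad(2)[OF s'(4), where A="a0 + a1*t^2" and B="a2*t" and C=a3]) (auto simp: algebra_simps)
    also have "\<dots> = (std_normal_density z * normal_density (C1 * z) S1 x1 * normal_density (C2 * z) S2 x2) *
      (normal_density (Ct * z) St t * ((a0 + a3*Cyz^2*z^2 + a3*Sy^2) + ((a2*Cyz + 2*a3*Cyz*Cyt)*z)*t + Kt*t^2))"
      by (simp add: Kt_def power2_eq_square algebra_simps)
    finally show "?thesis x1 x2 t" .
  qed
  have It: "\<And>x1 x2. (\<integral>t. \<integral>y. gg D z x1 x2 t y * (a0 + a1*t^2 + a2*(t*y) + a3*y^2) \<partial>lborel \<partial>lborel) =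
      (std_normal_density z * normal_density (C1 * z) S1 x1) * (normal_density (C2 * z) S2 x2 *
        ((a0 + a3*Sy^2 + Kt*St^2 + (a3*Cyz^2 + a2*Cyz*Ct + 2*a3*Cyz*Cyt*Ct + Kt*Ct^2)*z^2) + 0 * x2 + 0 * x2^2))"
  proof -
    fix x1 x2
    have "(\<integral>t. \<integral>y. gg D z x1 x2 t y * (a0 + a1*t^2 + a2*(t*y) + a3*y^2) \<partial>lborel \<partial>lborel) =
       (std_normal_density z * normal_density (C1 * z) S1 x1 * normal_density (C2 * z) S2 x2) *
       ((a0 + a3*Cyz^2*z^2 + a3*Sy^2) + ((a2*Cyz + 2*a3*Cyz*Cyt)*z)*(Ct*z) + Kt*((Ct*z)^2 + St^2))"
      unfolding Iy by (subst integral_mult_right_zero, subst nd_quad(2)[OF s'(3), where A="a0 + a3*Cyz^2*z^2 + a3*Sy^2" and B="(a2*Cyz + 2*a3*Cyz*Cyt)*z" and C=Kt]) auto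
    also have "\<dots> = (std_normal_density z * normal_density (C1 * z) S1 x1) * (normal_density (C2 * z) S2 x2 *
        ((a0 + a3*Sy^2 + Kt*St^2 + (a3*Cyz^2 + a2*Cyz*Ct + 2*a3*Cyz*Cyt*Ct + Kt*Ct^2)*z^2) + 0 * x2 + 0 * x2^2))"
      by (simp add: power2_eq_square algebra_simps)
    finally show "?thesis x1 x2" .
  qed
  define V where "V = a0 + a3*Sy^2 + Kt*St^2 + (a3*Cyz^2 + a2*Cyz*Ct + 2*a3*Cyz*Cyt*Ct + Kt*Ct^2)*z^2"
  have Ix2: "\<And>x1. (\<integral>x2. \<integral>t. \<integral>y. gg D z x1 x2 t y * (a0 + a1*t^2 + a2*(t*y) + a3*y^2) \<partial>lborel \<partial>lborel \<partial>lborel) =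
      std_normal_density z * (normal_density (C1 * z) S1 x1 * (V + 0 * x1 + 0 * x1^2))"
    unfolding It V_def[symmetric] by (subst integral_mult_right_zero, subst nd_quad(2)[OF s'(2), where A=V and B=0 and C=0]) auto
  have "(\<integral>x1. \<integral>x2. \<integral>t. \<integral>y. gg D z x1 x2 t y * (a0 + a1*t^2 + a2*(t*y) + a3*y^2) \<partial>lborel \<partial>lborel \<partial>lborel \<partial>lborel)
     = std_normal_density z * V"
    unfolding Ix2 by (subst integral_mult_right_zero, subst nd_quad(2)[OF s'(1), where A=V and B=0 and C=0]) auto
  then show ?thesis
    by (simp add: V_def Kt_def defs)
qed

lemma EXP:
  assumes D: "valid_dgp D"
  shows "integrable M4 (\<lambda>(x1,x2,t,y). p_obs D x1 x2 t y * (a0 + a1*t^2 + a2*(t*y) + a3*y^2))"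
    and "(\<integral>x1. \<integral>x2. \<integral>t. \<integral>y. p_obs D x1 x2 t y * (a0 + a1*t^2 + a2*(t*y) + a3*y^2) \<partial>lborel \<partial>lborel \<partial>lborel \<partial>lborel)
       = a0 + a1 * Stt D + a2 * Sty D + a3 * Syy D"
proof -
  define K where "K = \<bar>a0\<bar> + \<bar>a1\<bar> + \<bar>a2\<bar> + \<bar>a3\<bar>"
  have hm: "(\<lambda>w. (\<lambda>x1 x2 t y. a0 + a1*t^2 + a2*(t*y) + a3*y^2) (fst w) (fst (snd w)) (fst (snd (snd w))) (snd (snd (snd w)))) \<in> borel_measurable M4"
    by simp
  have hb: "\<And>x1 x2 t y. \<bar>(\<lambda>x1 x2 t y. a0 + a1*t^2 + a2*(t*y) + a3*y^2) x1 x2 t y\<bar> \<le> K * BB x1 x2 t y"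
  proof -
    fix x1 x2 t y :: real
    have B: "1 \<le> BB x1 x2 t y" "t^2 \<le> BB x1 x2 t y" "y^2 \<le> BB x1 x2 t y" "\<bar>t*y\<bar> \<le> BB x1 x2 t y"
    proof -
      have "0 \<le> (\<bar>t\<bar> - \<bar>y\<bar>)^2" by simp
      then have "2*\<bar>t*y\<bar> \<le> t^2 + y^2" by (simp add: power2_eq_square algebra_simps abs_mult)
      then show "\<bar>t*y\<bar> \<le> BB x1 x2 t y" unfolding BB_def by (smt (verit) zero_le_power2)
    qed (auto simp: BB_def)
    have "\<bar>a0 + a1*t^2 + a2*(t*y) + a3*y^2\<bar> \<le> \<bar>a0\<bar> + \<bar>a1*t^2\<bar> + \<bar>a2*(t*y)\<bar> + \<bar>a3*y^2\<bar>"
      using abs_triangle_ineq[of "a0 + a1*t^2 + a2*(t*y)" "a3*y^2"] abs_triangle_ineq[of "a0 + a1*t^2" "a2*(t*y)"]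
        abs_triangle_ineq[of a0 "a1*t^2"] by linarith
    also have "\<dots> = \<bar>a0\<bar>*1 + \<bar>a1\<bar>*t^2 + \<bar>a2\<bar>*\<bar>t*y\<bar> + \<bar>a3\<bar>*y^2"
      by (simp add: abs_mult)
    also have "\<dots> \<le> \<bar>a0\<bar>*BB x1 x2 t y + \<bar>a1\<bar>*BB x1 x2 t y + \<bar>a2\<bar>*BB x1 x2 t y + \<bar>a3\<bar>*BB x1 x2 t y"
      using B by (intro add_mono mult_left_mono) auto
    also have "\<dots> = K * BB x1 x2 t y" by (simp add: K_def algebra_simps)
    finally show "\<bar>(\<lambda>x1 x2 t y. a0 + a1*t^2 + a2*(t*y) + a3*y^2) x1 x2 t y\<bar> \<le> K * BB x1 x2 t y" by simp
  qed
  note P = pint[OF D hm hb]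
  show I: "integrable M4 (\<lambda>(x1,x2,t,y). p_obs D x1 x2 t y * (a0 + a1*t^2 + a2*(t*y) + a3*y^2))"
    using P(1) by simp
  have "(\<integral>x1. \<integral>x2. \<integral>t. \<integral>y. p_obs D x1 x2 t y * (a0 + a1*t^2 + a2*(t*y) + a3*y^2) \<partial>lborel \<partial>lborel \<partial>lborel \<partial>lborel)
     = integral\<^sup>L M4 (\<lambda>(x1,x2,t,y). p_obs D x1 x2 t y * (a0 + a1*t^2 + a2*(t*y) + a3*y^2))"
    using nest4[OF I] by simp
  also have "\<dots> = (\<integral>z. integral\<^sup>L M4 (\<lambda>(x1,x2,t,y). gg D z x1 x2 t y * (a0 + a1*t^2 + a2*(t*y) + a3*y^2)) \<partial>lborel)"
    using P(2) by simp
  also have "\<dots> = (\<integral>z. std_normal_density z * ((a0 + a3* sig_y D^2 + (a1 + a2*c_yt D + a3*c_yt D^2)* sig_t D^2) + 0*z +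
       (a3*c_yz D^2 + a2*c_yz D*c_t D + 2*a3*c_yz D*c_yt D*c_t D + (a1 + a2*c_yt D + a3*c_yt D^2)*c_t D^2)*z^2) \<partial>lborel)"
  proof (rule integral_cong_AE)
    show "(\<lambda>z. integral\<^sup>L M4 (\<lambda>(x1,x2,t,y). gg D z x1 x2 t y * (a0 + a1*t^2 + a2*(t*y) + a3*y^2))) \<in> borel_measurable lborel"
      by (rule sigma_finite_measure.borel_measurable_lebesgue_integral[OF sf_M4])
         (unfold gg_def normal_density_def split_beta', measurable)
    show "(\<lambda>z. std_normal_density z * ((a0 + a3* sig_y D^2 + (a1 + a2*c_yt D + a3*c_yt D^2)* sig_t D^2) + 0*z +
       (a3*c_yz D^2 + a2*c_yz D*c_t D + 2*a3*c_yz D*c_yt D*c_t D + (a1 + a2*c_yt D + a3*c_yt D^2)*c_t D^2)*z^2)) \<in> borel_measurable lborel"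
      unfolding normal_density_def by measurable
    show "AE z in lborel. integral\<^sup>L M4 (\<lambda>(x1,x2,t,y). gg D z x1 x2 t y * (a0 + a1*t^2 + a2*(t*y) + a3*y^2)) =
       std_normal_density z * ((a0 + a3* sig_y D^2 + (a1 + a2*c_yt D + a3*c_yt D^2)* sig_t D^2) + 0*z +
       (a3*c_yz D^2 + a2*c_yz D*c_t D + 2*a3*c_yz D*c_yt D*c_t D + (a1 + a2*c_yt D + a3*c_yt D^2)*c_t D^2)*z^2)"
      using P(3)
    proof eventually_elim
      case (elim z)
      then have "integrable M4 (\<lambda>(x1,x2,t,y). gg D z x1 x2 t y * (a0 + a1*t^2 + a2*(t*y) + a3*y^2))" by simp
      from nest4[OF this] NZ[OF D, of z a0 a1 a2 a3] show ?case by simp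
    qed
  qed
  also have "\<dots> = (a0 + a3* sig_y D^2 + (a1 + a2*c_yt D + a3*c_yt D^2)* sig_t D^2) + 0*0 +
       (a3*c_yz D^2 + a2*c_yz D*c_t D + 2*a3*c_yz D*c_yt D*c_t D + (a1 + a2*c_yt D + a3*c_yt D^2)*c_t D^2)*(0^2+1^2)"
    by (rule nd_quad(2)) auto
  also have "\<dots> = a0 + a1 * Stt D + a2 * Sty D + a3 * Syy D"
    by (simp add: Stt_def Sty_def Syy_def power2_eq_square algebra_simps)
  finally show "(\<integral>x1. \<integral>x2. \<integral>t. \<integral>y. p_obs D x1 x2 t y * (a0 + a1*t^2 + a2*(t*y) + a3*y^2) \<partial>lborel \<partial>lborel \<partial>lborel \<partial>lborel)
       = a0 + a1 * Stt D + a2 * Sty D + a3 * Syy D" .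
qed

lemma poly_id:
  fixes P Q g h b0 S m t y :: real
  assumes P: "0 < P" and Q: "0 < Q"
  defines "vt \<equiv> g^2 + P" and "DD \<equiv> P* Q + g^2* Q + h^2* P"
  shows "1/2 - S/2 - g^2* S/(2* P) - h^2* S/(2* Q) - (t-g* m)^2/(2* P) - (y - b0* t - h* m)^2/(2* Q) - m^2/2
    = - (t^2)/(2 * vt) - (y - (b0 + h* g/vt)* t)^2/(2*(Q + h^2* P/vt)) - S/(2*(P* Q/DD))
      - (m - (g* Q* t + h* P*(y - b0* t))/DD)^2/(2*(P* Q/DD)) + 1/2"
proof -
  have vt: "0 < vt" unfolding vt_def using P by (simp add: add_nonneg_pos)
  have DD: "0 < DD" unfolding DD_def using P Q by (simp add: add_pos_nonneg)
  have rr: "Q + h^2* P/vt = DD/vt" using vt unfolding DD_def vt_def by (simp add: field_simps)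
  show ?thesis
    unfolding rr using P Q vt DD
    apply (simp add: field_simps)
    apply (simp only: DD_def vt_def)
    apply algebra
    done
qed

definition "vtP P = g_t P ^ 2 + s_t P ^ 2"
definition "bbP P = g_yt P + g_yz P * g_t P / vtP P"
definition "rrP P = s_y P ^ 2 + g_yz P ^ 2 * s_t P ^ 2 / vtP P"
definition "lnpth P t y = - ln (sqrt (2 * pi * vtP P)) - ln (sqrt (2 * pi * rrP P))
   - (t^2) / (2 * vtP P) - (y - bbP P * t)^2 / (2 * rrP P)"
definition "elbo_cf P m t y = - ln (sqrt (2 * pi * s_t P ^ 2)) - ln (sqrt (2 * pi * s_y P ^ 2))
   + ln (sqrt (2 * pi * s_q P ^ 2)) - ln (sqrt (2 * pi)) + 1/2 - s_q P ^ 2 / 2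
   - g_t P ^ 2 * s_q P ^ 2 / (2 * s_t P ^ 2) - g_yz P ^ 2 * s_q P ^ 2 / (2 * s_y P ^ 2)
   - (t - g_t P * m)^2 / (2 * s_t P ^ 2) - (y - g_yt P * t - g_yz P * m)^2 / (2 * s_y P ^ 2) - m^2 / 2"

lemma lnsq: "0 < x \<Longrightarrow> ln (sqrt (2 * pi * x)) = (ln (2 * pi) + ln x) / 2"
  by (simp add: ln_sqrt ln_mult)

lemma elbo_le:
  assumes V: "valid_cevae P"
  shows "elbo_cf P m t y \<le> lnpth P t y"
proof -
  define PP Q g h b0 S where defs: "PP = s_t P ^ 2" "Q = s_y P ^ 2" "g = g_t P" "h = g_yz P" "b0 = g_yt P" "S = s_q P ^ 2"
  have PP: "0 < PP" and Q: "0 < Q" and S: "0 < S" using V unfolding valid_cevae_def defs by auto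
  define vt DD where "vt = g^2 + PP" and "DD = PP * Q + g^2 * Q + h^2 * PP"
  have vt: "0 < vt" unfolding vt_def using PP by (simp add: add_nonneg_pos)
  have DD: "0 < DD" unfolding DD_def using PP Q by (simp add: add_pos_nonneg)
  define rr where "rr = Q + h^2 * PP / vt"
  have rr: "rr = DD / vt" unfolding rr_def using vt unfolding DD_def vt_def by (simp add: field_simps)
  have rrp: "0 < rr" unfolding rr using DD vt by simp
  define v mu where "v = PP * Q / DD" and "mu = (g * Q * t + h * PP * (y - b0 * t)) / DD"
  have vp: "0 < v" unfolding v_def using PP Q DD by simp
  have e1: "elbo_cf P m t y = (- ln (sqrt (2 * pi * PP)) - ln (sqrt (2 * pi * Q)) + ln (sqrt (2 * pi * S)) - ln (sqrt (2 * pi)))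
     + (1/2 - S/2 - g^2 * S/(2 * PP) - h^2 * S/(2 * Q) - (t - g * m)^2/(2 * PP) - (y - b0 * t - h * m)^2/(2 * Q) - m^2/2)"
    unfolding elbo_cf_def defs by simp
  have e2: "lnpth P t y = (- ln (sqrt (2 * pi * vt)) - ln (sqrt (2 * pi * rr)))
     + (- (t^2)/(2 * vt) - (y - (b0 + h * g/vt) * t)^2/(2 * (Q + h^2 * PP/vt)))"
    unfolding lnpth_def vtP_def bbP_def rrP_def rr_def vt_def defs by simp
  have pid: "1/2 - S/2 - g^2 * S/(2 * PP) - h^2 * S/(2 * Q) - (t - g * m)^2/(2 * PP) - (y - b0 * t - h * m)^2/(2 * Q) - m^2/2
     = - (t^2)/(2 * vt) - (y - (b0 + h * g/vt) * t)^2/(2 * (Q + h^2 * PP/vt)) - S/(2 * v) - (m - mu)^2/(2 * v) + 1/2"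
    unfolding v_def mu_def vt_def DD_def by (rule poly_id[OF PP Q])
  have lS: "ln (S / v) = ln S - ln PP - ln Q + ln DD"
    unfolding v_def using S PP Q DD by (simp add: ln_div ln_mult)
  have lrr: "ln rr = ln DD - ln vt" unfolding rr using DD vt by (simp add: ln_div)
  have L: "(- ln (sqrt (2 * pi * PP)) - ln (sqrt (2 * pi * Q)) + ln (sqrt (2 * pi * S)) - ln (sqrt (2 * pi)))
      - (- ln (sqrt (2 * pi * vt)) - ln (sqrt (2 * pi * rr))) = ln (S / v) / 2"
    using PP Q S vt rrp by (simp add: lnsq lS lrr ln_sqrt ln_mult field_simps)
  have lnle: "ln (S / v) \<le> S / v - 1" using S vp by (intro ln_le_minus_one) simp
  have sq: "0 \<le> (m - mu)^2/(2 * v)" using vp by simp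
  have "S/(2 * v) = (S / v) / 2" by simp
  then show ?thesis unfolding e1 e2 pid using L lnle sq by linarith
qed

lemma ln_nd: "0 < \<sigma> \<Longrightarrow> ln (normal_density \<mu> \<sigma> x) = - ln (sqrt (2 * pi * \<sigma>^2)) - (x - \<mu>)^2 / (2 * \<sigma>^2)"
  unfolding normal_density_def by (simp add: ln_mult ln_div)

lemma elbo0_cf:
  assumes V: "valid_cevae P"
  shows "elbo0 P x1 x2 t y = elbo_cf P (a_1 P * x1 + a_2 P * x2 + a_t P * t + a_y P * y) t y"
proof -
  define m where "m = a_1 P * x1 + a_2 P * x2 + a_t P * t + a_y P * y"
  define St Sy Sq g h b0 where defs: "St = s_t P" "Sy = s_y P" "Sq = s_q P" "g = g_t P" "h = g_yz P" "b0 = g_yt P"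
  have St: "0 < St" and Sy: "0 < Sy" and Sq: "0 < Sq" using V unfolding valid_cevae_def defs by auto
  define Lt Ly Ls L1 where "Lt = ln (sqrt (2 * pi * St^2))" and "Ly = ln (sqrt (2 * pi * Sy^2))"
    and "Ls = ln (sqrt (2 * pi * Sq^2))" and "L1 = ln (sqrt (2 * pi))"
  define A B C where "A = - Lt - Ly - (t^2)/(2 * St^2) - (y - b0 * t)^2/(2 * Sy^2)"
    and "B = g * t / St^2 + h * (y - b0 * t) / Sy^2" and "C = - (g^2)/(2 * St^2) - h^2/(2 * Sy^2)"
  have I1: "(\<integral>z. enc P x1 x2 t y z * (ln (dec_t P z t) + ln (dec_y P z t y)) \<partial>lborel) = A + B * m + C * (m^2 + Sq^2)"
  proof -
    have "(\<integral>z. enc P x1 x2 t y z * (ln (dec_t P z t) + ln (dec_y P z t y)) \<partial>lborel) =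
        (\<integral>z. normal_density m Sq z * (A + B * z + C * z^2) \<partial>lborel)"
    proof (intro Bochner_Integration.integral_cong refl)
      fix z
      have "ln (dec_t P z t) + ln (dec_y P z t y) = - Lt - (t - g * z)^2 / (2 * St^2) - Ly - (y - (h * z + b0 * t))^2 / (2 * Sy^2)"
        unfolding dec_t_def dec_y_def using St Sy by (simp add: ln_nd defs Lt_def Ly_def)
      also have "\<dots> = A + B * z + C * z^2"
        unfolding A_def B_def C_def using St Sy
        apply (simp add: field_simps)
        apply algebra
        done
      finally show "enc P x1 x2 t y z * (ln (dec_t P z t) + ln (dec_y P z t y)) = normal_density m Sq z * (A + B * z + C * z^2)"
        unfolding enc_def m_def defs by simp
    qed
    also have "\<dots> = A + B * m + C * (m^2 + Sq^2)"
      by (rule nd_quad(2)[OF Sq]) simp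
    finally show ?thesis .
  qed
  define A2 B2 C2 where "A2 = - Ls + L1 - m^2/(2 * Sq^2)" and "B2 = m / Sq^2" and "C2 = 1/2 - 1/(2 * Sq^2)"
  have I2: "KL_enc P x1 x2 t y = A2 + B2 * m + C2 * (m^2 + Sq^2)"
  proof -
    have "KL_enc P x1 x2 t y = (\<integral>z. normal_density m Sq z * (A2 + B2 * z + C2 * z^2) \<partial>lborel)"
      unfolding KL_enc_def
    proof (intro Bochner_Integration.integral_cong refl)
      fix z
      have "ln (enc P x1 x2 t y z / std_normal_density z) = ln (normal_density m Sq z) - ln (std_normal_density z)"
        unfolding enc_def m_def defs using V
        by (intro ln_divide_pos normal_density_pos) (auto simp: valid_cevae_def)
      also have "\<dots> = (- Ls - (z - m)^2 / (2 * Sq^2)) - (- L1 - (z - 0)^2/(2 * 1^2))"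
        using Sq by (simp add: ln_nd Ls_def L1_def)
      also have "\<dots> = A2 + B2 * z + C2 * z^2"
        unfolding A2_def B2_def C2_def using Sq
        apply (simp add: field_simps)
        apply algebra
        done
      finally show "enc P x1 x2 t y z * ln (enc P x1 x2 t y z / std_normal_density z) = normal_density m Sq z * (A2 + B2 * z + C2 * z^2)"
        unfolding enc_def m_def defs by simp
    qed
    also have "\<dots> = A2 + B2 * m + C2 * (m^2 + Sq^2)"
      by (rule nd_quad(2)[OF Sq]) simp
    finally show ?thesis .
  qed
  show ?thesis
    unfolding elbo0_def I1 I2 elbo_cf_def m_def[symmetric] defs[symmetric]
    unfolding A_def B_def C_def A2_def B2_def C2_def Lt_def Ly_def Ls_def L1_def using St Sy Sq
    apply (simp add: field_simps)
    apply algebra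
    done
qed

lemma sq4: "(a+b+c+d)^2 \<le> 4 * (a^2+b^2+c^2+(d::real)^2)"
proof -
  have "4 * (a^2+b^2+c^2+d^2) - (a+b+c+d)^2 = (a-b)^2+(a-c)^2+(a-d)^2+(b-c)^2+(b-d)^2+(c-d)^2"
    by (simp add: power2_eq_square algebra_simps)
  moreover have "0 \<le> (a-b)^2+(a-c)^2+(a-d)^2+(b-c)^2+(b-d)^2+(c-d)^2" by simp
  ultimately show ?thesis by linarith
qed

lemma lin_sq: "(l1 * x1 + l2 * x2 + l3 * t + l4 * y)^2 \<le> 4 * (l1^2 + l2^2 + l3^2 + l4^2) * BB x1 x2 t y"
proof -
  define L where "L = l1^2 + l2^2 + l3^2 + l4^2"
  have "(l1 * x1 + l2 * x2 + l3 * t + l4 * y)^2 \<le> 4 * (l1^2 * x1^2 + l2^2 * x2^2 + l3^2 * t^2 + l4^2 * y^2)"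
    using sq4[of "l1 * x1" "l2 * x2" "l3 * t" "l4 * y"] by (simp add: power_mult_distrib)
  also have "\<dots> \<le> 4 * (L * x1^2 + L * x2^2 + L * t^2 + L * y^2)"
    unfolding L_def by (intro mult_left_mono add_mono mult_right_mono) auto
  also have "\<dots> \<le> 4 * L * BB x1 x2 t y"
    unfolding BB_def L_def by (simp add: algebra_simps)
  finally show ?thesis unfolding L_def .
qed

definition "c0P P = - ln (sqrt (2 * pi * s_t P ^ 2)) - ln (sqrt (2 * pi * s_y P ^ 2))
   + ln (sqrt (2 * pi * s_q P ^ 2)) - ln (sqrt (2 * pi)) + 1/2 - s_q P ^ 2 / 2
   - g_t P ^ 2 * s_q P ^ 2 / (2 * s_t P ^ 2) - g_yz P ^ 2 * s_q P ^ 2 / (2 * s_y P ^ 2)"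

lemma elbo_cf_c0: "elbo_cf P m t y = c0P P - (t - g_t P * m)^2 / (2 * s_t P ^ 2) - (y - g_yt P * t - g_yz P * m)^2 / (2 * s_y P ^ 2) - m^2 / 2"
  unfolding elbo_cf_def c0P_def by simp

lemma elbo_bound:
  assumes V: "valid_cevae P"
  shows "\<exists>K. \<forall>x1 x2 t y. \<bar>elbo_cf P (a_1 P * x1 + a_2 P * x2 + a_t P * t + a_y P * y) t y\<bar> \<le> K * BB x1 x2 t y"
proof -
  define g h b0 a1 a2 aT ay where defs: "g = g_t P" "h = g_yz P" "b0 = g_yt P" "a1 = a_1 P" "a2 = a_2 P" "aT = a_t P" "ay = a_y P"
  have St: "0 < s_t P" and Sy: "0 < s_y P" using V unfolding valid_cevae_def by auto
  define L1 L2 L3 where "L1 = (-g*a1)^2 + (-g*a2)^2 + (1-g*aT)^2 + (-g*ay)^2"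
    and "L2 = (-h*a1)^2 + (-h*a2)^2 + (-b0-h*aT)^2 + (1-h*ay)^2"
    and "L3 = a1^2 + a2^2 + aT^2 + ay^2"
  define K where "K = \<bar>c0P P\<bar> + 4 * L1 / (2 * s_t P ^ 2) + 4 * L2 / (2 * s_y P ^ 2) + 4 * L3 / 2"
  show ?thesis
  proof (intro exI allI)
    fix x1 x2 t y
    define m where "m = a1 * x1 + a2 * x2 + aT * t + ay * y"
    have B1: "1 \<le> BB x1 x2 t y" by (rule BB_ge1)
    have q1: "(t - g * m)^2 \<le> 4 * L1 * BB x1 x2 t y"
    proof -
      have "t - g * m = (-g*a1) * x1 + (-g*a2) * x2 + (1-g*aT) * t + (-g*ay) * y"
        unfolding m_def by (simp add: algebra_simps)
      then show ?thesis unfolding L1_def using lin_sq by metis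
    qed
    have q2: "(y - b0 * t - h * m)^2 \<le> 4 * L2 * BB x1 x2 t y"
    proof -
      have "y - b0 * t - h * m = (-h*a1) * x1 + (-h*a2) * x2 + (-b0-h*aT) * t + (1-h*ay) * y"
        unfolding m_def by (simp add: algebra_simps)
      then show ?thesis unfolding L2_def using lin_sq by metis
    qed
    have q3: "m^2 \<le> 4 * L3 * BB x1 x2 t y" unfolding m_def L3_def by (rule lin_sq)
    have e: "elbo_cf P m t y = c0P P - (t - g * m)^2 / (2 * s_t P ^ 2) - (y - b0 * t - h * m)^2 / (2 * s_y P ^ 2) - m^2 / 2"
      unfolding elbo_cf_c0 defs ..
    have d1: "(t - g * m)^2 / (2 * s_t P ^ 2) \<le> 4 * L1 / (2 * s_t P ^ 2) * BB x1 x2 t y"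
      using q1 St by (simp add: field_simps)
    have d2: "(y - b0 * t - h * m)^2 / (2 * s_y P ^ 2) \<le> 4 * L2 / (2 * s_y P ^ 2) * BB x1 x2 t y"
      using q2 Sy by (simp add: field_simps)
    have n1: "0 \<le> (t - g * m)^2 / (2 * s_t P ^ 2)" and n2: "0 \<le> (y - b0 * t - h * m)^2 / (2 * s_y P ^ 2)"
      and n3: "0 \<le> m^2/2" by simp_all
    have c: "\<bar>c0P P\<bar> \<le> \<bar>c0P P\<bar> * BB x1 x2 t y" using B1 by (simp add: mult_le_cancel_left1)
    have "\<bar>elbo_cf P m t y\<bar> \<le> \<bar>c0P P\<bar> * BB x1 x2 t y + 4 * L1 / (2 * s_t P ^ 2) * BB x1 x2 t y
        + 4 * L2 / (2 * s_y P ^ 2) * BB x1 x2 t y + 4 * L3 / 2 * BB x1 x2 t y"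
      unfolding e abs_le_iff using d1 d2 q3 n1 n2 n3 c abs_ge_self[of "c0P P"] abs_ge_minus_self[of "c0P P"]
      by (intro conjI) linarith+
    also have "\<dots> = K * BB x1 x2 t y" unfolding K_def by (simp add: algebra_simps)
    finally show "\<bar>elbo_cf P (a_1 P * x1 + a_2 P * x2 + a_t P * t + a_y P * y) t y\<bar> \<le> K * BB x1 x2 t y"
      unfolding m_def defs .
  qed
qed

definition "a0P P = - ln (sqrt (2 * pi * vtP P)) - ln (sqrt (2 * pi * rrP P))"
definition "a1P P = - 1 / (2 * vtP P) - bbP P ^ 2 / (2 * rrP P)"
definition "a2P P = bbP P / rrP P"
definition "a3P P = - 1 / (2 * rrP P)"
definition "Elnp D P = a0P P + a1P P * Stt D + a2P P * Sty D + a3P P * Syy D"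

lemma vt_pos: "valid_cevae P \<Longrightarrow> 0 < vtP P"
  unfolding vtP_def valid_cevae_def by (simp add: add_nonneg_pos)

lemma rr_pos: "valid_cevae P \<Longrightarrow> 0 < rrP P"
  unfolding rrP_def using vt_pos[of P] unfolding valid_cevae_def
  by (simp add: add_pos_nonneg)

lemma lnpth_poly:
  assumes V: "valid_cevae P"
  shows "lnpth P t y = a0P P + a1P P * t^2 + a2P P * (t * y) + a3P P * y^2"
  using vt_pos[OF V] rr_pos[OF V]
  unfolding lnpth_def a0P_def a1P_def a2P_def a3P_def
  by (simp add: field_simps power2_eq_square)

lemma p_obs_nonneg: "0 \<le> p_obs D x1 x2 t y"
  unfolding p_obs_gg by (intro integral_nonneg_AE) (simp add: gg_nonneg)

lemma L0_le:
  assumes D: "valid_dgp D" and V: "valid_cevae P"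
  shows "L0 D P \<le> Elnp D P"
proof -
  obtain K where hb: "\<And>x1 x2 t y. \<bar>elbo_cf P (a_1 P * x1 + a_2 P * x2 + a_t P * t + a_y P * y) t y\<bar> \<le> K * BB x1 x2 t y"
    using elbo_bound[OF V] by blast
  have hm: "(\<lambda>w. (\<lambda>x1 x2 t y. elbo_cf P (a_1 P * x1 + a_2 P * x2 + a_t P * t + a_y P * y) t y)
      (fst w) (fst (snd w)) (fst (snd (snd w))) (snd (snd (snd w)))) \<in> borel_measurable M4"
    unfolding elbo_cf_def by measurable
  have I1: "integrable M4 (\<lambda>(x1,x2,t,y). p_obs D x1 x2 t y * elbo_cf P (a_1 P * x1 + a_2 P * x2 + a_t P * t + a_y P * y) t y)"
    using pint(1)[OF D hm, of K] hb by simp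
  note I2 = EXP(1)[OF D, of "a0P P" "a1P P" "a2P P" "a3P P"]
  have "L0 D P = (\<integral>x1. \<integral>x2. \<integral>t. \<integral>y. p_obs D x1 x2 t y * elbo_cf P (a_1 P * x1 + a_2 P * x2 + a_t P * t + a_y P * y) t y
      \<partial>lborel \<partial>lborel \<partial>lborel \<partial>lborel)"
    unfolding L0_def elbo0_cf[OF V] ..
  also have "\<dots> = integral\<^sup>L M4 (\<lambda>(x1,x2,t,y). p_obs D x1 x2 t y * elbo_cf P (a_1 P * x1 + a_2 P * x2 + a_t P * t + a_y P * y) t y)"
    using nest4[OF I1] by simp
  also have "\<dots> \<le> integral\<^sup>L M4 (\<lambda>(x1,x2,t,y). p_obs D x1 x2 t y * (a0P P + a1P P * t^2 + a2P P * (t * y) + a3P P * y^2))"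
  proof (rule integral_mono[OF I1 I2])
    fix w :: "real \<times> real \<times> real \<times> real"
    obtain x1 x2 t y where w: "w = (x1,x2,t,y)" by (metis prod.collapse)
    have "p_obs D x1 x2 t y * elbo_cf P (a_1 P * x1 + a_2 P * x2 + a_t P * t + a_y P * y) t y \<le> p_obs D x1 x2 t y * lnpth P t y"
      by (intro mult_left_mono elbo_le[OF V] p_obs_nonneg)
    then show "(\<lambda>(x1,x2,t,y). p_obs D x1 x2 t y * elbo_cf P (a_1 P * x1 + a_2 P * x2 + a_t P * t + a_y P * y) t y) w
      \<le> (\<lambda>(x1,x2,t,y). p_obs D x1 x2 t y * (a0P P + a1P P * t^2 + a2P P * (t * y) + a3P P * y^2)) w"
      unfolding w lnpth_poly[OF V] by simp
  qed
  also have "\<dots> = (\<integral>x1. \<integral>x2. \<integral>t. \<integral>y. p_obs D x1 x2 t y * (a0P P + a1P P * t^2 + a2P P * (t * y) + a3P P * y^2)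
      \<partial>lborel \<partial>lborel \<partial>lborel \<partial>lborel)"
    using nest4[OF I2] by simp
  also have "\<dots> = Elnp D P"
    unfolding Elnp_def by (rule EXP(2)[OF D])
  finally show ?thesis .
qed

definition "RR D = Syy D - Sty D ^ 2 / Stt D"
definition "Fmax D = - ln (sqrt (2 * pi * Stt D)) - ln (sqrt (2 * pi * RR D)) - 1"

lemma Stt_pos: "valid_dgp D \<Longrightarrow> 0 < Stt D"
  unfolding Stt_def valid_dgp_def by (simp add: add_nonneg_pos)

lemma RR_alt: "valid_dgp D \<Longrightarrow> RR D = c_yz D ^ 2 * sig_t D ^ 2 / Stt D + sig_y D ^ 2"
  using Stt_pos[of D] unfolding RR_def Syy_def Sty_def
  by (simp add: field_simps) (simp add: Stt_def power2_eq_square algebra_simps)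

lemma RR_pos: "valid_dgp D \<Longrightarrow> 0 < RR D"
  using Stt_pos[of D] RR_alt[of D] unfolding valid_dgp_def
  by (simp add: add_nonneg_pos)

lemma Elnp_form:
  assumes D: "valid_dgp D" and V: "valid_cevae P"
  shows "Elnp D P = - ln (sqrt (2 * pi * vtP P)) - ln (sqrt (2 * pi * rrP P)) - Stt D / (2 * vtP P)
     - (RR D + (bbP P * Stt D - Sty D)^2 / Stt D) / (2 * rrP P)"
  using Stt_pos[OF D] vt_pos[OF V] rr_pos[OF V]
  unfolding Elnp_def a0P_def a1P_def a2P_def a3P_def RR_def
  by (simp add: field_simps power2_eq_square)

lemma Elnp_le:
  assumes D: "valid_dgp D" and V: "valid_cevae P"
  shows "Elnp D P \<le> Fmax D"
    and "Fmax D \<le> Elnp D P \<Longrightarrow> vtP P = Stt D \<and> bbP P = Sty D / Stt D \<and> rrP P = RR D"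
proof -
  define x r S R q where "x = vtP P" and "r = rrP P" and "S = Stt D" and "R = RR D"
    and "q = (bbP P * Stt D - Sty D)^2 / Stt D"
  have x: "0 < x" and r: "0 < r" and S: "0 < S" and R: "0 < R"
    using vt_pos[OF V] rr_pos[OF V] Stt_pos[OF D] RR_pos[OF D] unfolding x_def r_def S_def R_def by auto
  have q: "0 \<le> q" unfolding q_def using Stt_pos[OF D] by simp
  define l where "l = ln (2 * pi)"
  have E: "Elnp D P = - (l + ln x)/2 - (l + ln r)/2 - S / (2 * x) - (R + q) / (2 * r)"
  proof -
    have a: "ln (sqrt (2 * pi * vtP P)) = (l + ln x)/2" using lnsq[of x] x unfolding x_def l_def by simp
    have b: "ln (sqrt (2 * pi * rrP P)) = (l + ln r)/2" using lnsq[of r] r unfolding r_def l_def by simp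
    show ?thesis unfolding Elnp_form[OF D V] a b unfolding x_def r_def S_def R_def q_def by (simp add: field_simps)
  qed
  have F: "Fmax D = - (l + ln S)/2 - (l + ln R)/2 - 1"
  proof -
    have a: "ln (sqrt (2 * pi * Stt D)) = (l + ln S)/2" using lnsq[of S] S unfolding S_def l_def by simp
    have b: "ln (sqrt (2 * pi * RR D)) = (l + ln R)/2" using lnsq[of R] R unfolding R_def l_def by simp
    show ?thesis unfolding Fmax_def a b by (simp add: field_simps)
  qed
  have l1: "ln (S/x) \<le> S/x - 1" using S x by (intro ln_le_minus_one) simp
  have l2: "ln (R/r) \<le> R/r - 1" using R r by (intro ln_le_minus_one) simp
  have e1: "ln (S/x) = ln S - ln x" using S x by (simp add: ln_div)
  have e2: "ln (R/r) = ln R - ln r" using R r by (simp add: ln_div)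
  have qr: "0 \<le> q / r" using q r by simp
  have d1: "S / (2 * x) = (S/x)/2" and d2: "(R + q) / (2 * r) = (R/r)/2 + (q/r)/2"
    by (simp_all add: add_divide_distrib)
  have E2: "2 * Elnp D P = - 2*l - ln x - ln r - S/x - R/r - q/r"
    unfolding E d1 d2 by (simp add: field_simps)
  have F2: "2 * Fmax D = - 2*l - ln S - ln R - 2"
    unfolding F by (simp add: field_simps)
  show "Elnp D P \<le> Fmax D"
    using E2 F2 l1 l2 e1 e2 qr by linarith
  assume "Fmax D \<le> Elnp D P"
  then have h: "2 * Fmax D \<le> 2 * Elnp D P" by simp
  have "ln (S/x) = S/x - 1" using h E2 F2 l1 l2 e1 e2 qr by linarith
  then have "S/x = 1" using S x by (intro ln_eq_minus_one) simp_all
  then have xS: "x = S" using x by (simp add: field_simps)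
  have "ln (R/r) = R/r - 1" using h E2 F2 l1 l2 e1 e2 qr by linarith
  then have "R/r = 1" using R r by (intro ln_eq_minus_one) simp_all
  then have rR: "r = R" using r by (simp add: field_simps)
  have "q / r = 0" using h E2 F2 l1 l2 e1 e2 qr by linarith
  then have "q = 0" using r by simp
  then have "bbP P * Stt D - Sty D = 0" unfolding q_def using Stt_pos[OF D] by simp
  then have "bbP P = Sty D / Stt D" using Stt_pos[OF D] by (simp add: field_simps)
  then show "vtP P = Stt D \<and> bbP P = Sty D / Stt D \<and> rrP P = RR D"
    using xS rR unfolding x_def r_def S_def R_def by simp
qed

definition "Pst D = (| g_t = 0, g_yz = 0, g_yt = Sty D / Stt D, s_t = sqrt (Stt D), s_y = sqrt (RR D),
   a_1 = 0, a_2 = 0, a_t = 0, a_y = 0, s_q = 1 |)"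

lemma Pst_valid: "valid_dgp D \<Longrightarrow> valid_cevae (Pst D)"
  using Stt_pos[of D] RR_pos[of D] unfolding valid_cevae_def Pst_def by simp

lemma Pst_vals:
  assumes D: "valid_dgp D"
  shows "vtP (Pst D) = Stt D" "bbP (Pst D) = Sty D / Stt D" "rrP (Pst D) = RR D"
  using Stt_pos[OF D] RR_pos[OF D] unfolding vtP_def bbP_def rrP_def Pst_def by simp_all

lemma Pst_Elnp: "valid_dgp D \<Longrightarrow> Elnp D (Pst D) = Fmax D"
  using Stt_pos[of D] RR_pos[of D]
  by (simp add: Elnp_form Pst_valid Pst_vals Fmax_def field_simps)

lemma Pst_L0:
  assumes D: "valid_dgp D"
  shows "L0 D (Pst D) = Fmax D"
proof -
  have e: "\<And>x1 x2 t y. elbo0 (Pst D) x1 x2 t y = a0P (Pst D) + a1P (Pst D) * t^2 + a2P (Pst D) * (t * y) + a3P (Pst D) * y^2"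
  proof -
    fix x1 x2 t y
    have "elbo0 (Pst D) x1 x2 t y = elbo_cf (Pst D) 0 t y"
      unfolding elbo0_cf[OF Pst_valid[OF D]] by (simp add: Pst_def)
    also have "\<dots> = lnpth (Pst D) t y"
      using Stt_pos[OF D] RR_pos[OF D]
      unfolding elbo_cf_def lnpth_def Pst_vals[OF D] by (simp add: Pst_def)
    also have "\<dots> = a0P (Pst D) + a1P (Pst D) * t^2 + a2P (Pst D) * (t * y) + a3P (Pst D) * y^2"
      by (rule lnpth_poly[OF Pst_valid[OF D]])
    finally show "?thesis x1 x2 t y" .
  qed
  have "L0 D (Pst D) = Elnp D (Pst D)"
    unfolding L0_def e Elnp_def by (rule EXP(2)[OF D])
  then show ?thesis using Pst_Elnp[OF D] by simp
qed

lemma nd_int1: "0 < v \<Longrightarrow> (\<integral>z. c * normal_density m v z \<partial>lborel) = c"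
  by simp

lemma p_do_form:
  assumes V: "valid_cevae P"
  shows "p_do P t y = normal_density (g_yt P * t) (sqrt (g_yz P ^ 2 + s_y P ^ 2)) y"
proof -
  have sy: "0 < s_y P" using V unfolding valid_cevae_def by simp
  define S where "S = g_yz P ^ 2 * 1 ^ 2 + s_y P ^ 2"
  have Sp: "0 < S" unfolding S_def using sy by (simp add: add_nonneg_pos)
  have "p_do P t y = (\<integral>z. normal_density (g_yz P * 0 + g_yt P * t) (sqrt S) y *
       normal_density (0 + g_yz P * 1^2 * (y - g_yz P * 0 - g_yt P * t) / S) (sqrt (1^2 * s_y P ^ 2 / S)) z \<partial>lborel)"
    unfolding p_do_def dec_y_def S_def
    by (intro Bochner_Integration.integral_cong refl) (subst nd_prod[symmetric], simp_all add: sy mult.commute)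
  also have "\<dots> = normal_density (g_yz P * 0 + g_yt P * t) (sqrt S) y"
    by (rule nd_int1) (use Sp sy in simp)
  finally show ?thesis unfolding S_def by simp
qed

lemma nd_prod_ex:
  assumes "0 < r0" "0 < \<sigma>"
  shows "\<exists>m' v'. 0 < v' \<and> (\<forall>z. normal_density m0 r0 z * normal_density (\<alpha> * z) \<sigma> u =
     normal_density (\<alpha> * m0) (sqrt (\<alpha>^2 * r0^2 + \<sigma>^2)) u * normal_density m' v' z)"
proof -
  have S: "0 < \<alpha>^2 * r0^2 + \<sigma>^2" using assms by (simp add: add_nonneg_pos)
  show ?thesis
    apply (rule exI[of _ "m0 + \<alpha> * r0^2 * (u - \<alpha> * m0 - 0)/(\<alpha>^2 * r0^2 + \<sigma>^2)"])
    apply (rule exI[of _ "sqrt (r0^2 * \<sigma>^2/(\<alpha>^2 * r0^2 + \<sigma>^2))"])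
    using nd_prod[OF assms, of m0 _ \<alpha> 0 u] S assms by simp
qed

lemma nd_prod_exb:
  assumes "0 < r0" "0 < \<sigma>"
  shows "\<exists>m' v'. 0 < v' \<and> (\<forall>z. normal_density m0 r0 z * normal_density (\<alpha> * z + \<beta>) \<sigma> u =
     normal_density (\<alpha> * m0 + \<beta>) (sqrt (\<alpha>^2 * r0^2 + \<sigma>^2)) u * normal_density m' v' z)"
proof -
  have S: "0 < \<alpha>^2 * r0^2 + \<sigma>^2" using assms by (simp add: add_nonneg_pos)
  show ?thesis
    apply (rule exI[of _ "m0 + \<alpha> * r0^2 * (u - \<alpha> * m0 - \<beta>)/(\<alpha>^2 * r0^2 + \<sigma>^2)"])
    apply (rule exI[of _ "sqrt (r0^2 * \<sigma>^2/(\<alpha>^2 * r0^2 + \<sigma>^2))"])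
    using nd_prod[OF assms, of m0 _ \<alpha> \<beta> u] S assms by simp
qed

lemma sqrt_pos2: "0 < \<sigma> \<Longrightarrow> 0 < sqrt (a^2 + \<sigma>^2)"
  by (simp add: add_nonneg_pos)

lemma p_ty_form:
  assumes D: "valid_dgp D"
  shows "p_ty D t y = normal_density 0 (sqrt (Stt D)) t * normal_density (Sty D / Stt D * t) (sqrt (RR D)) y"
proof -
  define C1 C2 Ct Cyz Cyt S1 S2 St Sy where defs: "C1 = c_1 D" "C2 = c_2 D" "Ct = c_t D" "Cyz = c_yz D" "Cyt = c_yt D"
    "S1 = sig_1 D" "S2 = sig_2 D" "St = sig_t D" "Sy = sig_y D"
  have s: "0 < S1" "0 < S2" "0 < St" "0 < Sy" using D unfolding valid_dgp_def defs by auto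
  define SA where "SA = Ct^2 * 1^2 + St^2"
  have SA: "0 < SA" unfolding SA_def using s by (simp add: add_nonneg_pos)
  define mA vA where "mA = 0 + Ct * 1^2 * (t - Ct * 0 - 0) / SA" and "vA = sqrt (1^2 * St^2 / SA)"
  have vA: "0 < vA" unfolding vA_def using SA s by simp
  define NA where "NA = normal_density (Ct * 0 + 0) (sqrt SA) t"
  have A: "std_normal_density z * normal_density (Ct * z) St t = NA * normal_density mA vA z" for z
    unfolding NA_def mA_def vA_def SA_def using nd_prod[of 1 St 0 z Ct 0 t] s by simp
  obtain mB vB where vB: "0 < vB" and B: "\<And>z. normal_density mA vA z * normal_density (Cyz * z + Cyt * t) Sy y =
      normal_density (Cyz * mA + Cyt * t) (sqrt (Cyz^2 * vA^2 + Sy^2)) y * normal_density mB vB z"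
    using nd_prod_exb[OF vA s(4), of mA Cyz "Cyt * t" y] by blast
  define NB where "NB = normal_density (Cyz * mA + Cyt * t) (sqrt (Cyz^2 * vA^2 + Sy^2)) y"
  have g1: "\<And>x1 x2 z. gg D z x1 x2 t y = NA * NB * ((normal_density mB vB z * normal_density (C1 * z) S1 x1) * normal_density (C2 * z) S2 x2)"
  proof -
    fix x1 x2 z
    have "gg D z x1 x2 t y = (std_normal_density z * normal_density (Ct * z) St t) * normal_density (Cyz * z + Cyt * t) Sy y
       * normal_density (C1 * z) S1 x1 * normal_density (C2 * z) S2 x2"
      unfolding gg_def defs by (simp add: ac_simps)
    also have "\<dots> = NA * (normal_density mA vA z * normal_density (Cyz * z + Cyt * t) Sy y)
       * normal_density (C1 * z) S1 x1 * normal_density (C2 * z) S2 x2"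
      unfolding A by (simp add: ac_simps)
    also have "\<dots> = NA * NB * ((normal_density mB vB z * normal_density (C1 * z) S1 x1) * normal_density (C2 * z) S2 x2)"
      unfolding B NB_def by (simp add: ac_simps)
    finally show "gg D z x1 x2 t y = NA * NB * ((normal_density mB vB z * normal_density (C1 * z) S1 x1) * normal_density (C2 * z) S2 x2)" .
  qed
  have i1: "\<And>x1. (\<integral>x2. p_obs D x1 x2 t y \<partial>lborel) = NA * NB * normal_density (C1 * mB) (sqrt (C1^2 * vB^2 + S1^2)) x1"
  proof -
    fix x1
    obtain mC vC where vC: "0 < vC" and C: "\<And>z. normal_density mB vB z * normal_density (C1 * z) S1 x1 =
      normal_density (C1 * mB) (sqrt (C1^2 * vB^2 + S1^2)) x1 * normal_density mC vC z"
      using nd_prod_ex[OF vB s(1), of mB C1 x1] by blast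
    define NC where "NC = normal_density (C1 * mB) (sqrt (C1^2 * vB^2 + S1^2)) x1"
    have i2: "\<And>x2. p_obs D x1 x2 t y = NA * NB * NC * normal_density (C2 * mC) (sqrt (C2^2 * vC^2 + S2^2)) x2"
    proof -
      fix x2
      obtain mD vD where vD: "0 < vD" and Dd: "\<And>z. normal_density mC vC z * normal_density (C2 * z) S2 x2 =
        normal_density (C2 * mC) (sqrt (C2^2 * vC^2 + S2^2)) x2 * normal_density mD vD z"
        using nd_prod_ex[OF vC s(2), of mC C2 x2] by blast
      have "p_obs D x1 x2 t y = (\<integral>z. (NA * NB * NC * normal_density (C2 * mC) (sqrt (C2^2 * vC^2 + S2^2)) x2) * normal_density mD vD z \<partial>lborel)"
      proof (unfold p_obs_gg, intro Bochner_Integration.integral_cong refl)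
        fix z
        have "gg D z x1 x2 t y = NA * NB * NC * (normal_density mC vC z * normal_density (C2 * z) S2 x2)"
          unfolding g1 C NC_def by (simp only: mult.assoc)
        also have "\<dots> = (NA * NB * NC * normal_density (C2 * mC) (sqrt (C2^2 * vC^2 + S2^2)) x2) * normal_density mD vD z"
          unfolding Dd by (simp only: mult.assoc)
        finally show "gg D z x1 x2 t y = (NA * NB * NC * normal_density (C2 * mC) (sqrt (C2^2 * vC^2 + S2^2)) x2) * normal_density mD vD z" .
      qed
      also have "\<dots> = NA * NB * NC * normal_density (C2 * mC) (sqrt (C2^2 * vC^2 + S2^2)) x2"
        by (rule nd_int1[OF vD])
      finally show "?thesis x2" .
    qed
    have "(\<integral>x2. p_obs D x1 x2 t y \<partial>lborel) = (\<integral>x2. (NA * NB * NC) * normal_density (C2 * mC) (sqrt (C2^2 * vC^2 + S2^2)) x2 \<partial>lborel)"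
      unfolding i2 ..
    also have "\<dots> = NA * NB * NC" by (rule nd_int1) (use s in \<open>simp add: add_nonneg_pos\<close>)
    finally show "?thesis x1" unfolding NC_def .
  qed
  have "p_ty D t y = (\<integral>x1. (NA * NB) * normal_density (C1 * mB) (sqrt (C1^2 * vB^2 + S1^2)) x1 \<partial>lborel)"
    unfolding p_ty_def i1 ..
  also have "\<dots> = NA * NB" by (rule nd_int1) (use s in \<open>simp add: add_nonneg_pos\<close>)
  also have "NA = normal_density 0 (sqrt (Stt D)) t"
    unfolding NA_def SA_def Stt_def defs by simp
  also have "NB = normal_density (Sty D / Stt D * t) (sqrt (RR D)) y"
  proof -
    have St2: "vA^2 = St^2 / SA" unfolding vA_def using SA by simp
    have SAe: "SA = Stt D" unfolding SA_def Stt_def defs by simp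
    have m: "Cyz * mA + Cyt * t = Sty D / Stt D * t"
      unfolding mA_def Sty_def SAe defs using Stt_pos[OF D] by (simp add: field_simps)
    have v: "Cyz^2 * vA^2 + Sy^2 = RR D"
      unfolding St2 RR_alt[OF D] SAe defs by simp
    show ?thesis unfolding NB_def m v ..
  qed
  finally show ?thesis .
qed

lemma p_cond_form:
  assumes D: "valid_dgp D"
  shows "p_cond D t y = normal_density (Sty D / Stt D * t) (sqrt (RR D)) y"
proof -
  have R: "0 < sqrt (RR D)" using RR_pos[OF D] by simp
  have S: "0 < sqrt (Stt D)" using Stt_pos[OF D] by simp
  have "p_t D t = (\<integral>y. normal_density 0 (sqrt (Stt D)) t * normal_density (Sty D / Stt D * t) (sqrt (RR D)) y \<partial>lborel)"
    unfolding p_t_def p_ty_form[OF D] ..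
  also have "\<dots> = normal_density 0 (sqrt (Stt D)) t" by (rule nd_int1[OF R])
  finally have pt: "p_t D t = normal_density 0 (sqrt (Stt D)) t" .
  have "0 < normal_density 0 (sqrt (Stt D)) t" by (rule normal_density_pos[OF S])
  then show ?thesis unfolding p_cond_def pt p_ty_form[OF D] by simp
qed

theorem proposition3:
  fixes D :: dgp
  assumes "valid_dgp D"
  shows "(\<exists>P. is_global_max D P \<and> g_yz P = 0)
       \<and> (\<exists>P. is_global_max D P \<and> g_t P = 0)
       \<and> (\<forall>P. is_global_max D P \<and> (g_yz P = 0 \<or> g_t P = 0)
              \<longrightarrow> (\<forall>t y. p_do P t y = p_cond D t y))"
proof -
  note D = assms
  have gm: "is_global_max D (Pst D)"
    unfolding is_global_max_def
  proof (intro conjI allI impI)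
    show "valid_cevae (Pst D)" by (rule Pst_valid[OF D])
    fix P' assume V': "valid_cevae P'"
    have "L0 D P' \<le> Elnp D P'" by (rule L0_le[OF D V'])
    also have "\<dots> \<le> Fmax D" by (rule Elnp_le(1)[OF D V'])
    also have "\<dots> = L0 D (Pst D)" by (rule Pst_L0[OF D, symmetric])
    finally show "L0 D P' \<le> L0 D (Pst D)" .
  qed
  have z: "g_yz (Pst D) = 0" "g_t (Pst D) = 0" unfolding Pst_def by simp_all
  have b: "\<forall>t y. p_do P t y = p_cond D t y" if P: "is_global_max D P" and c: "g_yz P = 0 \<or> g_t P = 0" for P
  proof -
    have V: "valid_cevae P" using P unfolding is_global_max_def by simp
    have "Fmax D = L0 D (Pst D)" by (rule Pst_L0[OF D, symmetric])
    also have "\<dots> \<le> L0 D P" using P Pst_valid[OF D] unfolding is_global_max_def by simp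
    also have "\<dots> \<le> Elnp D P" by (rule L0_le[OF D V])
    finally have eq: "vtP P = Stt D \<and> bbP P = Sty D / Stt D \<and> rrP P = RR D"
      by (rule Elnp_le(2)[OF D V])
    have st: "0 < s_t P" using V unfolding valid_cevae_def by simp
    have key: "g_yt P = Sty D / Stt D \<and> g_yz P ^ 2 + s_y P ^ 2 = RR D"
      using c
    proof
      assume h: "g_yz P = 0"
      then show ?thesis using eq unfolding bbP_def rrP_def by simp
    next
      assume h: "g_t P = 0"
      then have v: "vtP P = s_t P ^ 2" unfolding vtP_def by simp
      have r: "rrP P = s_y P ^ 2 + g_yz P ^ 2" unfolding rrP_def v using st by simp
      have bb: "bbP P = g_yt P" unfolding bbP_def h by simp
      show ?thesis using eq r bb by (simp add: add.commute)
    qed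
    show ?thesis
    proof (intro allI)
      fix t y
      show "p_do P t y = p_cond D t y"
        unfolding p_do_form[OF V] p_cond_form[OF D] using key by simp
    qed
  qed
  show ?thesis using gm z b by blast
qed

end
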